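(* Let $N=N_A+N_B$ qubits be partitioned into $A$ and $B$, let $Q_0\in\{0,\dots,N\}$, and let $\ell:\{0,\dots,N_A\}\to\mathbb{Z}_{\ge0}$ with $r=\sum_{Q_A}\ell(Q_A)$. If $|\Phi\rangle$ is Haar-random in the charge-$Q_0$ sector of $AB$ and $p(Q_A,+):=\langle\Phi|\big(\hat\Pi_{Q_A}\otimes(|+\rangle\langle+|)^{\otimes N_B}\big)|\Phi\rangle$, then $$\mathbb{E}_\Phi\left[\prod_{Q_A=0}^{N_A}p(Q_A,+)^{\ell(Q_A)}\right]=\frac{\left(\binom{N}{Q_0}-1\right)!}{\left(\binom{N}{Q_0}-1+r\right)!}\,2^{-rN_B}\prod_{Q_A=0}^{N_A}\binom{N_B}{Q_0-Q_A}^{\ell(Q_A)}\frac{\left(\binom{N_A}{Q_A}-1+\ell(Q_A)\right)!}{\left(\binom{N_A}{Q_A}-1\right)!}.$$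
   Context: Charge of a computational basis string is its Hamming weight; $\hat\Pi_{Q_A}$ is the projector onto the charge-$Q_A$ sector of $A$, of dimension $\binom{N_A}{Q_A}$; $|+\rangle=(|0\rangle+|1\rangle)/\sqrt2$. Convention: $\binom{n}{m}=0$ if $m\notin\{0,\dots,n\}$, and $0^0=1$. *)

theory Defs
  imports "HOL-Analysis.Analysis" "HOL-Probability.Probability"
begin

text \<open>Computational basis strings of N qubits are encoded as the set of positions
 (in {..<N}) carrying a 1.  Qubits {..<NA} form A, qubits {NA..<NA+NB} form B.
 The charge of a string is its Hamming weight, i.e. the cardinality of the set.\<close>

definition basis_strings :: "nat \<Rightarrow> nat set set" where
  "basis_strings N = Pow {..<N}"

definition charge_sector :: "nat \<Rightarrow> nat \<Rightarrow> nat set set" where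
  "charge_sector N Q = {x. x \<subseteq> {..<N} \<and> card x = Q}"

definition charge_proj_A :: "nat \<Rightarrow> nat \<Rightarrow> nat set \<Rightarrow> nat set \<Rightarrow> complex" where
  "charge_proj_A NA QA x y =
     (if x \<inter> {..<NA} = y \<inter> {..<NA} \<and> card (x \<inter> {..<NA}) = QA then 1 else 0)"

definition plus_amp :: "bool \<Rightarrow> complex" where
  "plus_amp b = complex_of_real (1 / sqrt 2)"

definition plus_proj_B :: "nat \<Rightarrow> nat \<Rightarrow> nat set \<Rightarrow> nat set \<Rightarrow> complex" where
  "plus_proj_B NA NB x y =
     (\<Prod>j\<in>{NA..<NA+NB}. plus_amp (j \<in> x) * cnj (plus_amp (j \<in> y)))"

definition expval :: "nat \<Rightarrow> (nat set \<Rightarrow> nat set \<Rightarrow> complex) \<Rightarrow> (nat set \<Rightarrow> complex) \<Rightarrow> complex" where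
  "expval N Op \<Phi> = (\<Sum>x\<in>basis_strings N. \<Sum>y\<in>basis_strings N. cnj (\<Phi> x) * Op x y * \<Phi> y)"

definition p_plus :: "nat \<Rightarrow> nat \<Rightarrow> nat \<Rightarrow> (nat set \<Rightarrow> complex) \<Rightarrow> real" where
  "p_plus NA NB QA \<Phi> =
     Re (expval (NA + NB) (\<lambda>x y. charge_proj_A NA QA x y * plus_proj_B NA NB x y) \<Phi>)"

definition sector_space :: "nat \<Rightarrow> nat \<Rightarrow> (nat set \<Rightarrow> complex) measure" where
  "sector_space N Q = PiM (charge_sector N Q) (\<lambda>_. (lborel :: complex measure))"

definition sector_norm :: "nat \<Rightarrow> nat \<Rightarrow> (nat set \<Rightarrow> complex) \<Rightarrow> real" where
  "sector_norm N Q c = sqrt (\<Sum>s\<in>charge_sector N Q. (cmod (c s))\<^sup>2)"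

definition sector_ball :: "nat \<Rightarrow> nat \<Rightarrow> (nat set \<Rightarrow> complex) set" where
  "sector_ball N Q = {c \<in> space (sector_space N Q). sector_norm N Q c \<le> 1}"

definition sector_state :: "nat \<Rightarrow> nat \<Rightarrow> (nat set \<Rightarrow> complex) \<Rightarrow> (nat set \<Rightarrow> complex)" where
  "sector_state N Q c =
     (\<lambda>x. if x \<in> charge_sector N Q then c x / complex_of_real (sector_norm N Q c) else 0)"

text \<open>Haar (unitarily invariant, normalised surface) average over unit vectors of the
 charge-Q sector, realised as the cone measure: E[f] = (1/vol B) \<integral>_B f(c/|c|) dc.\<close>
definition haar_expectation :: "nat \<Rightarrow> nat \<Rightarrow> ((nat set \<Rightarrow> complex) \<Rightarrow> real) \<Rightarrow> real" where
  "haar_expectation N Q f =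
     integral\<^sup>L (uniform_measure (sector_space N Q) (sector_ball N Q)) (\<lambda>c. f (sector_state N Q c))"

end

theory Submission
  imports Defs
begin

lemma nn_int_complex_affine:
  fixes g :: "complex \<Rightarrow> ennreal" and v :: complex and t :: real
  assumes [measurable]: "g \<in> borel_measurable borel" and t: "t \<noteq> 0"
  shows "(\<integral>\<^sup>+z. g z \<partial>lborel) = ennreal (t^2) * (\<integral>\<^sup>+z. g (v + t *\<^sub>R z) \<partial>lborel)"
proof -
  have "(\<integral>\<^sup>+z. g z \<partial>lborel) = (\<integral>\<^sup>+z. g z \<partial>density (distr lborel borel (\<lambda>x. v + t *\<^sub>R x)) (\<lambda>_. ennreal (\<bar>t\<bar>^DIM(complex))))"
    using lborel_affine[OF t, of v] by (metis (no_types))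
  also have "\<dots> = (\<integral>\<^sup>+z. ennreal (\<bar>t\<bar>^2) * g z \<partial>distr lborel borel (\<lambda>x. v + t *\<^sub>R x))"
    by (simp add: nn_integral_density)
  also have "\<dots> = (\<integral>\<^sup>+z. ennreal (\<bar>t\<bar>^2) * g (v + t *\<^sub>R z) \<partial>lborel)"
    by (simp add: nn_integral_distr)
  also have "\<dots> = ennreal (t^2) * (\<integral>\<^sup>+z. g (v + t *\<^sub>R z) \<partial>lborel)"
    by (simp add: nn_integral_cmult)
  finally show ?thesis .
qed

lemma gauss_real: "(\<integral>\<^sup>+x. ennreal (exp (- x\<^sup>2)) \<partial>lborel) = ennreal (sqrt pi)"
proof -
  define \<sigma> :: real where "\<sigma> = 1 / sqrt 2"
  have s2: "\<sigma>\<^sup>2 = 1/2" by (simp add: \<sigma>_def power_divide)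
  have eq: "exp (- x\<^sup>2) = sqrt pi * normal_density 0 \<sigma> x" for x
    by (simp add: normal_density_def s2 real_sqrt_mult)
  have "(\<integral>\<^sup>+x. ennreal (normal_density 0 \<sigma> x) \<partial>lborel) = 1"
    using integrable_normal_density[of \<sigma> 0] integral_normal_density[of \<sigma> 0]
    by (subst nn_integral_eq_integral) (auto simp: \<sigma>_def)
  then show ?thesis
    by (simp add: eq ennreal_mult nn_integral_cmult)
qed

lemma gauss_complex: "(\<integral>\<^sup>+z. ennreal (exp (- (cmod (z::complex))\<^sup>2)) \<partial>lborel) = ennreal pi"
proof -
  have "(\<integral>\<^sup>+(z::complex). (\<Prod>b\<in>Basis. ennreal (exp (- (z \<bullet> b)\<^sup>2))) \<partial>lborel)
        = (\<Prod>b\<in>(Basis::complex set). (\<integral>\<^sup>+x. ennreal (exp (- x\<^sup>2)) \<partial>lborel))"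
    by (rule nn_integral_lborel_prod) auto
  also have "\<dots> = ennreal pi"
    by (simp add: gauss_real Basis_complex_def ennreal_mult[symmetric])
  also have "(\<lambda>z::complex. (\<Prod>b\<in>Basis. ennreal (exp (- (z \<bullet> b)\<^sup>2)))) = (\<lambda>z. ennreal (exp (- (cmod z)\<^sup>2)))"
    by (auto simp: Basis_complex_def cmod_power2 ennreal_mult[symmetric] exp_add[symmetric])
  finally show ?thesis .
qed

lemma gauss_complex_shift:
  fixes v :: complex and s :: real assumes s: "s > 0"
  shows "(\<integral>\<^sup>+z. ennreal (exp (- (s * (cmod (z - v))\<^sup>2))) \<partial>lborel) = ennreal (pi / s)"
proof -
  define t where "t = 1 / sqrt s"
  have t: "t \<noteq> 0" "t^2 = 1/s" using s by (auto simp: t_def power_divide)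
  have "(\<integral>\<^sup>+z. ennreal (exp (- (s * (cmod (z - v))\<^sup>2))) \<partial>lborel)
      = ennreal (t^2) * (\<integral>\<^sup>+z. ennreal (exp (- (s * (cmod (v + t *\<^sub>R z - v))\<^sup>2))) \<partial>lborel)"
    by (rule nn_int_complex_affine) (auto simp: t)
  also have "(\<lambda>z. ennreal (exp (- (s * (cmod (v + t *\<^sub>R z - v))\<^sup>2)))) = (\<lambda>z. ennreal (exp (- (cmod z)\<^sup>2)))"
    using s t by (auto simp: power_mult_distrib)
  finally show ?thesis using s t by (simp add: gauss_complex ennreal_mult[symmetric])
qed

lemma sq_identity_real:
  fixes x y a :: real
  shows "(x - a * y)\<^sup>2 + y\<^sup>2 = (a\<^sup>2+1) * (y - (a/(a\<^sup>2+1)) * x)\<^sup>2 + x\<^sup>2 / (a\<^sup>2+1)"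
proof -
  define s where "s = a\<^sup>2+1"
  have s: "s > 0" unfolding s_def using zero_le_power2[of a] by linarith
  have p: "s*((x - a*y)\<^sup>2 + y\<^sup>2) = (s*y - a*x)\<^sup>2 + x\<^sup>2"
    unfolding s_def by (simp add: power2_eq_square algebra_simps)
  have q: "s*y - a*x = s*(y - (a/s)*x)" using s by (simp add: field_simps)
  define Z where "Z = y - (a/s)*x"
  define L where "L = (x - a*y)\<^sup>2 + y\<^sup>2"
  have "s * L = s\<^sup>2 * Z\<^sup>2 + x\<^sup>2" using p q unfolding Z_def L_def by (simp add: power_mult_distrib)
  then have "L = s * Z\<^sup>2 + x\<^sup>2 / s" using s by (simp add: field_simps power2_eq_square)
  then show ?thesis unfolding L_def Z_def s_def .
qed

lemma sq_identity:
  fixes u w :: complex and a :: real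
  assumes "a \<ge> 0"
  shows "(cmod (u - a *\<^sub>R w))\<^sup>2 + (cmod w)\<^sup>2 = (a\<^sup>2+1) * (cmod (w - (a/(a\<^sup>2+1)) *\<^sub>R u))\<^sup>2 + (cmod u)\<^sup>2 / (a\<^sup>2+1)"
proof -
  define s where "s = a\<^sup>2+1"
  define b where "b = a/s"
  have e1: "(cmod (u - a *\<^sub>R w))\<^sup>2 = (Re u - a * Re w)\<^sup>2 + (Im u - a * Im w)\<^sup>2"
    by (simp add: cmod_power2)
  have e2: "(cmod (w - b *\<^sub>R u))\<^sup>2 = (Re w - b * Re u)\<^sup>2 + (Im w - b * Im u)\<^sup>2"
    by (simp add: cmod_power2)
  have e3: "(cmod w)\<^sup>2 = (Re w)\<^sup>2 + (Im w)\<^sup>2" "(cmod u)\<^sup>2 = (Re u)\<^sup>2 + (Im u)\<^sup>2"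
    by (simp_all add: cmod_power2)
  have r1: "(Re u - a * Re w)\<^sup>2 + (Re w)\<^sup>2 = s * (Re w - b * Re u)\<^sup>2 + (Re u)\<^sup>2 / s"
    using sq_identity_real[of "Re u" a "Re w"] unfolding s_def b_def .
  have r2: "(Im u - a * Im w)\<^sup>2 + (Im w)\<^sup>2 = s * (Im w - b * Im u)\<^sup>2 + (Im u)\<^sup>2 / s"
    using sq_identity_real[of "Im u" a "Im w"] unfolding s_def b_def .
  have "(cmod (u - a *\<^sub>R w))\<^sup>2 + (cmod w)\<^sup>2 = s * (cmod (w - b *\<^sub>R u))\<^sup>2 + (cmod u)\<^sup>2 / s"
    unfolding e1 e2 e3 distrib_left add_divide_distrib using r1 r2 by linarith
  then show ?thesis unfolding s_def b_def .
qed

lemma rot2: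
  fixes G :: "complex \<Rightarrow> ennreal" and a :: real
  assumes [measurable]: "G \<in> borel_measurable borel" and a: "a \<ge> 0"
  shows "(\<integral>\<^sup>+y. \<integral>\<^sup>+w. ennreal (exp (-(cmod y)\<^sup>2 - (cmod w)\<^sup>2)) * G (a *\<^sub>R w + y) \<partial>lborel \<partial>lborel)
       = ennreal pi * (\<integral>\<^sup>+u. ennreal (exp (-(cmod u)\<^sup>2)) * G (sqrt (a\<^sup>2+1) *\<^sub>R u) \<partial>lborel)"
proof -
  define s where "s = a\<^sup>2 + 1"
  have s: "s > 0" unfolding s_def using zero_le_power2[of a] by linarith
  have "(\<integral>\<^sup>+y. \<integral>\<^sup>+w. ennreal (exp (-(cmod y)\<^sup>2 - (cmod w)\<^sup>2)) * G (a *\<^sub>R w + y) \<partial>lborel \<partial>lborel)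
      = (\<integral>\<^sup>+w. \<integral>\<^sup>+y. ennreal (exp (-(cmod y)\<^sup>2 - (cmod w)\<^sup>2)) * G (a *\<^sub>R w + y) \<partial>lborel \<partial>lborel)"
    by (rule lborel_pair.Fubini') measurable
  also have "\<dots> = (\<integral>\<^sup>+w. \<integral>\<^sup>+u. ennreal (exp (-(cmod (u - a *\<^sub>R w))\<^sup>2 - (cmod w)\<^sup>2)) * G u \<partial>lborel \<partial>lborel)"
  proof (rule nn_integral_cong)
    fix w :: complex
    have "(\<integral>\<^sup>+u. ennreal (exp (-(cmod (u - a *\<^sub>R w))\<^sup>2 - (cmod w)\<^sup>2)) * G u \<partial>lborel)
      = ennreal (1^2) * (\<integral>\<^sup>+z. ennreal (exp (-(cmod ((a *\<^sub>R w + 1 *\<^sub>R z) - a *\<^sub>R w))\<^sup>2 - (cmod w)\<^sup>2)) * G (a *\<^sub>R w + 1 *\<^sub>R z) \<partial>lborel)"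
      by (rule nn_int_complex_affine) auto
    then show "(\<integral>\<^sup>+y. ennreal (exp (-(cmod y)\<^sup>2 - (cmod w)\<^sup>2)) * G (a *\<^sub>R w + y) \<partial>lborel)
      = (\<integral>\<^sup>+u. ennreal (exp (-(cmod (u - a *\<^sub>R w))\<^sup>2 - (cmod w)\<^sup>2)) * G u \<partial>lborel)"
      by simp
  qed
  also have "\<dots> = (\<integral>\<^sup>+u. \<integral>\<^sup>+w. ennreal (exp (-(cmod (u - a *\<^sub>R w))\<^sup>2 - (cmod w)\<^sup>2)) * G u \<partial>lborel \<partial>lborel)"
    by (rule lborel_pair.Fubini') measurable
  also have "\<dots> = (\<integral>\<^sup>+u. ennreal (pi / s) * (ennreal (exp (-(cmod u)\<^sup>2 / s)) * G u) \<partial>lborel)"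
  proof (rule nn_integral_cong)
    fix u :: complex
    have eq: "ennreal (exp (-(cmod (u - a *\<^sub>R w))\<^sup>2 - (cmod w)\<^sup>2)) * G u
        = (ennreal (exp (-(cmod u)\<^sup>2 / s)) * G u) * ennreal (exp (- s * (cmod (w - (a/s) *\<^sub>R u))\<^sup>2))" for w
    proof -
      have "-(cmod (u - a *\<^sub>R w))\<^sup>2 - (cmod w)\<^sup>2 = -(cmod u)\<^sup>2 / s - (s * (cmod (w - (a/s) *\<^sub>R u))\<^sup>2)"
        using sq_identity[OF a, of u w] unfolding s_def by linarith
      then have "-(cmod (u - a *\<^sub>R w))\<^sup>2 - (cmod w)\<^sup>2 = -(cmod u)\<^sup>2 / s + (- s * (cmod (w - (a/s) *\<^sub>R u))\<^sup>2)"
        by simp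
      then have "exp (-(cmod (u - a *\<^sub>R w))\<^sup>2 - (cmod w)\<^sup>2) = exp (-(cmod u)\<^sup>2 / s) * exp (- s * (cmod (w - (a/s) *\<^sub>R u))\<^sup>2)"
        by (simp add: exp_add[symmetric])
      then show ?thesis
        by (simp add: ennreal_mult mult_ac)
    qed
    show "(\<integral>\<^sup>+w. ennreal (exp (-(cmod (u - a *\<^sub>R w))\<^sup>2 - (cmod w)\<^sup>2)) * G u \<partial>lborel)
        = ennreal (pi / s) * (ennreal (exp (-(cmod u)\<^sup>2 / s)) * G u)"
      unfolding eq using s
      by (simp add: nn_integral_cmult gauss_complex_shift mult_ac)
  qed
  also have "\<dots> = ennreal (pi / s) * (\<integral>\<^sup>+u. ennreal (exp (-(cmod u)\<^sup>2 / s)) * G u \<partial>lborel)"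
    by (simp add: nn_integral_cmult)
  also have "(\<integral>\<^sup>+u. ennreal (exp (-(cmod u)\<^sup>2 / s)) * G u \<partial>lborel)
      = ennreal ((sqrt s)^2) * (\<integral>\<^sup>+z. ennreal (exp (-(cmod (0 + sqrt s *\<^sub>R z))\<^sup>2 / s)) * G (0 + sqrt s *\<^sub>R z) \<partial>lborel)"
    by (rule nn_int_complex_affine) (use s in auto)
  also have "(\<lambda>z. ennreal (exp (-(cmod (0 + sqrt s *\<^sub>R z))\<^sup>2 / s)) * G (0 + sqrt s *\<^sub>R z))
           = (\<lambda>z. ennreal (exp (-(cmod z)\<^sup>2)) * G (sqrt s *\<^sub>R z))"
    using s by (auto simp: power_mult_distrib)
  finally have "(\<integral>\<^sup>+y. \<integral>\<^sup>+w. ennreal (exp (-(cmod y)\<^sup>2 - (cmod w)\<^sup>2)) * G (a *\<^sub>R w + y) \<partial>lborel \<partial>lborel)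
     = (ennreal (pi / s) * ennreal ((sqrt s)^2)) * (\<integral>\<^sup>+z. ennreal (exp (-(cmod z)\<^sup>2)) * G (sqrt s *\<^sub>R z) \<partial>lborel)"
    by (simp only: mult.assoc)
  also have "ennreal (pi / s) * ennreal ((sqrt s)^2) = ennreal pi"
    using s by (simp add: ennreal_mult[symmetric])
  finally show ?thesis unfolding s_def .
qed



interpretation CPS: product_sigma_finite "\<lambda>_::'i. lborel :: complex measure"
  by unfold_locales

abbreviation MS :: "'i set \<Rightarrow> ('i \<Rightarrow> complex) measure" where
  "MS S \<equiv> PiM S (\<lambda>_. lborel)"

definition nsq :: "'i set \<Rightarrow> ('i \<Rightarrow> complex) \<Rightarrow> real" where
  "nsq S c = (\<Sum>s\<in>S. (cmod (c s))\<^sup>2)"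

lemma nsq_measurable[measurable]: "nsq S \<in> borel_measurable (MS S)"
  unfolding nsq_def by measurable

lemma pim_scale:
  fixes g :: "('i \<Rightarrow> complex) \<Rightarrow> ennreal"
  assumes "finite S" "t > 0" "g \<in> borel_measurable (MS S)"
  shows "integral\<^sup>N (MS S) g = ennreal (t^(2*card S)) * (\<integral>\<^sup>+c. g (\<lambda>s\<in>S. t *\<^sub>R c s) \<partial>MS S)"
  using assms(1,3)
proof (induction S arbitrary: g rule: finite_induct)
  case empty
  have "(\<integral>\<^sup>+c. g (\<lambda>s\<in>{}. t *\<^sub>R c s) \<partial>MS {}) = (\<integral>\<^sup>+c. g c \<partial>MS {})"
    by (rule nn_integral_cong) (auto simp: space_PiM_empty restrict_def)
  then show ?case by (simp only: card.empty mult_0_right power_0 ennreal_1 mult_1)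
next
  case (insert i S)
  note [measurable] = insert.prems
  have tne: "t \<noteq> 0" using assms(2) by simp
  define H where "H x = (\<integral>\<^sup>+y. g (x(i := t *\<^sub>R y)) \<partial>lborel)" for x
  have Hm[measurable]: "H \<in> borel_measurable (MS S)"
    unfolding H_def using insert.hyps by measurable
  have "integral\<^sup>N (MS (insert i S)) g = (\<integral>\<^sup>+x. \<integral>\<^sup>+y. g (x(i := y)) \<partial>lborel \<partial>MS S)"
    by (rule CPS.product_nn_integral_insert) (use insert in auto)
  also have "\<dots> = (\<integral>\<^sup>+x. ennreal (t^2) * H x \<partial>MS S)"
  proof (rule nn_integral_cong)
    fix x assume x: "x \<in> space (MS S)"
    have [measurable]: "(\<lambda>y. g (x(i := y))) \<in> borel_measurable borel"
      using measurable_comp[OF measurable_component_update[OF x insert.hyps(2)] insert.prems]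
      by (simp add: comp_def)
    show "(\<integral>\<^sup>+y. g (x(i := y)) \<partial>lborel) = ennreal (t^2) * H x"
      unfolding H_def using nn_int_complex_affine[of "\<lambda>y. g (x(i := y))" t 0] tne by simp
  qed
  also have "\<dots> = ennreal (t^2) * integral\<^sup>N (MS S) H"
    by (simp add: nn_integral_cmult)
  also have "integral\<^sup>N (MS S) H = ennreal (t^(2*card S)) * (\<integral>\<^sup>+c. H (\<lambda>s\<in>S. t *\<^sub>R c s) \<partial>MS S)"
    by (rule insert.IH) measurable
  also have "(\<integral>\<^sup>+c. H (\<lambda>s\<in>S. t *\<^sub>R c s) \<partial>MS S)
      = (\<integral>\<^sup>+x. \<integral>\<^sup>+y. g (\<lambda>s\<in>insert i S. t *\<^sub>R (x(i := y)) s) \<partial>lborel \<partial>MS S)"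
  proof (rule nn_integral_cong)
    fix x :: "'i \<Rightarrow> complex"
    have "(\<lambda>s\<in>S. t *\<^sub>R x s)(i := t *\<^sub>R y) = (\<lambda>s\<in>insert i S. t *\<^sub>R (x(i := y)) s)" for y
      using insert.hyps(2) by (auto simp: fun_eq_iff)
    then show "H (\<lambda>s\<in>S. t *\<^sub>R x s) = (\<integral>\<^sup>+y. g (\<lambda>s\<in>insert i S. t *\<^sub>R (x(i := y)) s) \<partial>lborel)"
      unfolding H_def by simp
  qed
  also have "\<dots> = (\<integral>\<^sup>+c. g (\<lambda>s\<in>insert i S. t *\<^sub>R c s) \<partial>MS (insert i S))"
    by (rule CPS.product_nn_integral_insert[symmetric]) (use insert in auto)
  finally have X: "integral\<^sup>N (MS (insert i S)) g = ennreal (t^2) * (ennreal (t^(2*card S)) * (\<integral>\<^sup>+c. g (\<lambda>s\<in>insert i S. t *\<^sub>R c s) \<partial>MS (insert i S)))" .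
  have Y: "ennreal (t^2) * ennreal (t^(2*card S)) = ennreal (t^(2*card (insert i S)))"
    using insert.hyps assms(2) by (simp add: ennreal_mult[symmetric] power_add[symmetric])
  show ?case using X Y by (metis mult.assoc)
qed

lemma nsq_scale: "nsq S (\<lambda>s\<in>S. t *\<^sub>R c s) = t\<^sup>2 * nsq S c"
  unfolding nsq_def by (simp add: sum_distrib_left power_mult_distrib)

lemma nsq_nonneg: "0 \<le> nsq S c"
  unfolding nsq_def by (simp add: sum_nonneg)

lemma sigma_finite_MS: "finite S \<Longrightarrow> sigma_finite_measure (MS S)"
proof -
  assume "finite S"
  then interpret finite_product_sigma_finite "\<lambda>_. lborel :: complex measure" S by unfold_locales
  show ?thesis by unfold_locales
qed

lemma ball_scale:
  fixes k :: "('i \<Rightarrow> complex) \<Rightarrow> ennreal"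
  assumes fin: "finite S" and km[measurable]: "k \<in> borel_measurable (MS S)"
  and hom: "\<And>c t. c \<in> space (MS S) \<Longrightarrow> t > 0 \<Longrightarrow> k (\<lambda>s\<in>S. t *\<^sub>R c s) = ennreal (t^(2*m)) * k c"
  and s: "s > 0"
  shows "(\<integral>\<^sup>+c. indicator {c. nsq S c \<le> s} c * k c \<partial>MS S) = ennreal (s^(card S + m)) * (\<integral>\<^sup>+c. indicator {c. nsq S c \<le> 1} c * k c \<partial>MS S)"
proof -
  define t where "t = sqrt s"
  have t: "t > 0" "t\<^sup>2 = s" using s by (auto simp: t_def)
  have "(\<integral>\<^sup>+c. indicator {c. nsq S c \<le> s} c * k c \<partial>MS S)
     = ennreal (t^(2*card S)) * (\<integral>\<^sup>+c. indicator {c. nsq S c \<le> s} (\<lambda>s\<in>S. t *\<^sub>R c s) * k (\<lambda>s\<in>S. t *\<^sub>R c s) \<partial>MS S)"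
    by (rule pim_scale[OF fin t(1)]) measurable
  also have "(\<integral>\<^sup>+c. indicator {c. nsq S c \<le> s} (\<lambda>s\<in>S. t *\<^sub>R c s) * k (\<lambda>s\<in>S. t *\<^sub>R c s) \<partial>MS S)
      = (\<integral>\<^sup>+c. ennreal (t^(2*m)) * (indicator {c. nsq S c \<le> 1} c * k c) \<partial>MS S)"
  proof (rule nn_integral_cong)
    fix c assume c: "c \<in> space (MS S)"
    have "(t\<^sup>2 * nsq S c \<le> s) = (nsq S c \<le> 1)" using t s by simp
    then show "indicator {c. nsq S c \<le> s} (\<lambda>s\<in>S. t *\<^sub>R c s) * k (\<lambda>s\<in>S. t *\<^sub>R c s)
      = ennreal (t^(2*m)) * (indicator {c. nsq S c \<le> 1} c * k c)"
      using hom[OF c t(1)] by (simp add: nsq_scale indicator_def mult_ac)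
  qed
  also have "\<dots> = ennreal (t^(2*m)) * (\<integral>\<^sup>+c. indicator {c. nsq S c \<le> 1} c * k c \<partial>MS S)"
    by (rule nn_integral_cmult) measurable
  finally show ?thesis
    using t s by (simp add: power_mult ennreal_mult power_add mult.assoc)
qed

lemma GL:
  fixes k :: "('i \<Rightarrow> complex) \<Rightarrow> ennreal" and w :: "real \<Rightarrow> real"
  assumes fin: "finite S" and km[measurable]: "k \<in> borel_measurable (MS S)"
  and wm[measurable]: "w \<in> borel_measurable borel" and wnn: "\<And>s. 0 \<le> w s"
  and hom: "\<And>c t. c \<in> space (MS S) \<Longrightarrow> t > 0 \<Longrightarrow> k (\<lambda>s\<in>S. t *\<^sub>R c s) = ennreal (t^(2*m)) * k c"
  shows "(\<integral>\<^sup>+c. (\<integral>\<^sup>+s. ennreal (w s) * indicator {0<..} s * indicator {nsq S c..} s \<partial>lborel) * k c \<partial>MS S)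
       = (\<integral>\<^sup>+s. ennreal (w s * s^(card S + m)) * indicator {0<..} s \<partial>lborel) * (\<integral>\<^sup>+c. indicator {c. nsq S c \<le> 1} c * k c \<partial>MS S)"
proof -
  interpret SF: sigma_finite_measure "MS S" using sigma_finite_MS[OF fin] .
  interpret P: pair_sigma_finite "MS S" "lborel :: real measure" by unfold_locales
  have "(\<integral>\<^sup>+c. (\<integral>\<^sup>+s. ennreal (w s) * indicator {0<..} s * indicator {nsq S c..} s \<partial>lborel) * k c \<partial>MS S)
     = (\<integral>\<^sup>+c. \<integral>\<^sup>+s. ennreal (w s) * indicator {0<..} s * indicator {nsq S c..} s * k c \<partial>lborel \<partial>MS S)"
    by (rule nn_integral_cong) (rule nn_integral_multc[symmetric], measurable)
  also have "\<dots> = (\<integral>\<^sup>+s. \<integral>\<^sup>+c. ennreal (w s) * indicator {0<..} s * indicator {nsq S c..} s * k c \<partial>MS S \<partial>lborel)"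
  proof (rule P.Fubini'[symmetric])
    have [measurable]: "Measurable.pred (MS S \<Otimes>\<^sub>M lborel) (\<lambda>p. nsq S (fst p) \<le> snd p)"
      by measurable
    have "(\<lambda>(c, s). indicator {nsq S c..} s) = (\<lambda>p. indicator {p. nsq S (fst p) \<le> snd p} p :: ennreal)"
      by (auto simp: fun_eq_iff indicator_def)
    moreover have "(\<lambda>p. indicator {p. nsq S (fst p) \<le> snd p} p :: ennreal) \<in> borel_measurable (MS S \<Otimes>\<^sub>M lborel)"
      by measurable
    ultimately have [measurable]: "(\<lambda>(c, s). indicator {nsq S c..} s :: ennreal) \<in> borel_measurable (MS S \<Otimes>\<^sub>M lborel)"
      by simp
    show "(\<lambda>(c, s). ennreal (w s) * indicator {0<..} s * indicator {nsq S c..} s * k c) \<in> borel_measurable (MS S \<Otimes>\<^sub>M lborel)"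
      by measurable
  qed
  also have "\<dots> = (\<integral>\<^sup>+s. ennreal (w s * s^(card S + m)) * indicator {0<..} s * (\<integral>\<^sup>+c. indicator {c. nsq S c \<le> 1} c * k c \<partial>MS S) \<partial>lborel)"
  proof (rule nn_integral_cong)
    fix s :: real
    show "(\<integral>\<^sup>+c. ennreal (w s) * indicator {0<..} s * indicator {nsq S c..} s * k c \<partial>MS S)
        = ennreal (w s * s^(card S + m)) * indicator {0<..} s * (\<integral>\<^sup>+c. indicator {c. nsq S c \<le> 1} c * k c \<partial>MS S)"
    proof (cases "s > 0")
      case True
      have "(\<integral>\<^sup>+c. ennreal (w s) * indicator {0<..} s * indicator {nsq S c..} s * k c \<partial>MS S)
          = (\<integral>\<^sup>+c. ennreal (w s) * (indicator {c. nsq S c \<le> s} c * k c) \<partial>MS S)"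
        using True by (intro nn_integral_cong) (simp add: indicator_def)
      also have "\<dots> = ennreal (w s) * (\<integral>\<^sup>+c. indicator {c. nsq S c \<le> s} c * k c \<partial>MS S)"
        by (rule nn_integral_cmult) measurable
      also have "\<dots> = ennreal (w s) * (ennreal (s^(card S + m)) * (\<integral>\<^sup>+c. indicator {c. nsq S c \<le> 1} c * k c \<partial>MS S))"
        using ball_scale[OF fin km hom True] by simp
      finally show ?thesis using True
        using wnn[of s] by (simp add: ennreal_mult mult.assoc)
    next
      case False
      then show ?thesis by simp
    qed
  qed
  also have "\<dots> = (\<integral>\<^sup>+s. ennreal (w s * s^(card S + m)) * indicator {0<..} s \<partial>lborel) * (\<integral>\<^sup>+c. indicator {c. nsq S c \<le> 1} c * k c \<partial>MS S)"
    by (rule nn_integral_multc) measurable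
  finally show ?thesis .
qed

lemma exp_lim: "((\<lambda>x::real. - exp (- x)) \<longlongrightarrow> 0) at_top"
proof -
  have eq: "(\<lambda>x::real. - exp (- x)) = (\<lambda>x. - (x^0 / exp x))"
    by (simp add: exp_minus inverse_eq_divide)
  have "((\<lambda>x::real. - (x^0 / exp x)) \<longlongrightarrow> - 0) at_top"
    by (rule tendsto_minus[OF tendsto_power_div_exp_0])
  then show ?thesis unfolding eq by simp
qed

lemma exp_layer:
  fixes u :: real assumes u: "0 \<le> u"
  shows "(\<integral>\<^sup>+s. ennreal (exp (- s)) * indicator {0<..} s * indicator {u..} s \<partial>lborel) = ennreal (exp (- u))"
proof -
  have "(\<integral>\<^sup>+s. ennreal (exp (- s)) * indicator {0<..} s * indicator {u..} s \<partial>lborel)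
      = (\<integral>\<^sup>+s. ennreal (exp (- s)) * indicator {u..} s \<partial>lborel)"
    by (rule nn_integral_cong_AE, rule AE_mp[OF AE_lborel_singleton[of 0]])
       (use u in \<open>auto simp: indicator_def\<close>)
  also have "\<dots> = ennreal (0 - (- exp (- u)))"
    by (rule nn_integral_FTC_atLeast) (auto intro!: derivative_eq_intros exp_lim)
  finally show ?thesis by simp
qed

lemma gamma_pos:
  "(\<integral>\<^sup>+s. ennreal (exp (- s) * s^n) * indicator {0<..} s \<partial>lborel) = ennreal (fact n)"
proof -
  have "(\<integral>\<^sup>+s. ennreal (exp (- s) * s^n) * indicator {0<..} s \<partial>lborel)
      = (\<integral>\<^sup>+s. ennreal (s^n * exp (- s)) * indicator {0..} s \<partial>lborel)"
    by (rule nn_integral_cong_AE, rule AE_mp[OF AE_lborel_singleton[of 0]])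
       (auto simp: indicator_def mult.commute)
  also have "\<dots> = ennreal (fact n)" by (simp add: nn_intergal_power_times_exp_Ici)
  finally show ?thesis .
qed

definition Bint :: "'i set \<Rightarrow> (('i \<Rightarrow> complex) \<Rightarrow> ennreal) \<Rightarrow> ennreal" where
  "Bint S k = (\<integral>\<^sup>+c. indicator {c. nsq S c \<le> 1} c * k c \<partial>MS S)"

lemma gauss_ball:
  fixes k :: "('i \<Rightarrow> complex) \<Rightarrow> ennreal"
  assumes fin: "finite S" and km[measurable]: "k \<in> borel_measurable (MS S)"
  and hom: "\<And>c t. c \<in> space (MS S) \<Longrightarrow> t > 0 \<Longrightarrow> k (\<lambda>s\<in>S. t *\<^sub>R c s) = ennreal (t^(2*m)) * k c"
  shows "(\<integral>\<^sup>+c. ennreal (exp (- nsq S c)) * k c \<partial>MS S) = ennreal (fact (card S + m)) * Bint S k"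
proof -
  have "(\<integral>\<^sup>+c. ennreal (exp (- nsq S c)) * k c \<partial>MS S)
     = (\<integral>\<^sup>+c. (\<integral>\<^sup>+s. ennreal (exp (- s)) * indicator {0<..} s * indicator {nsq S c..} s \<partial>lborel) * k c \<partial>MS S)"
    by (simp add: exp_layer nsq_nonneg)
  also have "\<dots> = (\<integral>\<^sup>+s. ennreal (exp (- s) * s^(card S + m)) * indicator {0<..} s \<partial>lborel) * Bint S k"
    unfolding Bint_def by (rule GL[OF fin km _ _ hom]) auto
  finally show ?thesis by (simp add: gamma_pos)
qed

lemma radial_inner:
  fixes u :: real and r :: nat assumes u: "0 \<le> u" and r: "r \<ge> 1"
  shows "(\<integral>\<^sup>+s. ennreal (if 0 \<le> s \<and> s \<le> 1 then real r * s^(r-1) else 0) * indicator {0<..} s * indicator {u..} s \<partial>lborel)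
       = (if u \<le> 1 then ennreal (1 - u^r) else 0)"
proof (cases "u \<le> 1")
  case True
  have "(\<integral>\<^sup>+s. ennreal (if 0 \<le> s \<and> s \<le> 1 then real r * s^(r-1) else 0) * indicator {0<..} s * indicator {u..} s \<partial>lborel)
      = (\<integral>\<^sup>+s. ennreal (real r * s^(r-1)) * indicator {u..1} s \<partial>lborel)"
    by (rule nn_integral_cong_AE, rule AE_mp[OF AE_lborel_singleton[of 0]])
       (use u in \<open>auto simp: indicator_def\<close>)
  also have "\<dots> = ennreal (1^r - u^r)"
    by (rule nn_integral_FTC_Icc) (use True u r in \<open>auto intro!: derivative_eq_intros\<close>)
  finally show ?thesis using True by simp
next
  case False
  then have "(\<lambda>s. ennreal (if 0 \<le> s \<and> s \<le> 1 then real r * s^(r-1) else 0) * indicator {0<..} s * indicator {u..} s) = (\<lambda>_. 0)"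
    by (auto simp: indicator_def fun_eq_iff)
  then show ?thesis using False by simp
qed

lemma radial_outer:
  fixes r D :: nat assumes r: "r \<ge> 1"
  shows "(\<integral>\<^sup>+s. ennreal ((if 0 \<le> s \<and> s \<le> 1 then real r * s^(r-1) else 0) * s^(D + 0)) * indicator {0<..} s \<partial>lborel)
       = ennreal (real r / real (r + D))"
proof -
  have "(\<integral>\<^sup>+s. ennreal ((if 0 \<le> s \<and> s \<le> 1 then real r * s^(r-1) else 0) * s^(D + 0)) * indicator {0<..} s \<partial>lborel)
      = (\<integral>\<^sup>+s. ennreal (real r * s^(r - 1 + D)) * indicator {0..1} s \<partial>lborel)"
    by (rule nn_integral_cong_AE, rule AE_mp[OF AE_lborel_singleton[of 0]])
       (auto simp: indicator_def power_add)
  also have "\<dots> = ennreal (real r / real (r + D) * 1^(r + D) - real r / real (r + D) * 0^(r+D))"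
  proof (rule nn_integral_FTC_Icc)
    fix x :: real assume "x \<in> {0..1}"
    have "DERIV (\<lambda>x. real r / real (r + D) * x^(r + D)) x :> real r / real (r + D) * (real (r + D) * x^(r + D - Suc 0))"
      by (rule DERIV_cmult[OF DERIV_pow])
    moreover have "real r / real (r + D) * (real (r + D) * x^(r + D - Suc 0)) = real r * x^(r - 1 + D)"
      using r by (simp add: Suc_diff_le)
    ultimately show "DERIV (\<lambda>x. real r / real (r + D) * x^(r + D)) x :> real r * x^(r - 1 + D)"
      by simp
  qed (auto)
  finally show ?thesis using r by (simp add: power_0_left)
qed

lemma radial:
  fixes h :: "('i \<Rightarrow> complex) \<Rightarrow> ennreal" and r :: nat
  assumes fin: "finite S" and ne: "S \<noteq> {}" and hm[measurable]: "h \<in> borel_measurable (MS S)"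
  and hom: "\<And>c t. c \<in> space (MS S) \<Longrightarrow> t > 0 \<Longrightarrow> h (\<lambda>s\<in>S. t *\<^sub>R c s) = h c"
  and fi: "Bint S h < \<infinity>"
  shows "Bint S (\<lambda>c. ennreal (nsq S c ^ r) * h c) = ennreal (real (card S) / real (card S + r)) * Bint S h"
proof (cases "r = 0")
  case True
  then show ?thesis using fin ne by (simp add: Bint_def)
next
  case False
  then have r: "r \<ge> 1" by simp
  define w where "w s = (if 0 \<le> s \<and> s \<le> 1 then real r * s^(r-1) else 0)" for s :: real
  have wnn: "0 \<le> w s" for s unfolding w_def by auto
  have hom': "h (\<lambda>s\<in>S. t *\<^sub>R c s) = ennreal (t^(2*0)) * h c" if "c \<in> space (MS S)" "t > 0" for c t
    using hom[OF that] by simp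
  have "(\<integral>\<^sup>+c. (\<integral>\<^sup>+s. ennreal (w s) * indicator {0<..} s * indicator {nsq S c..} s \<partial>lborel) * h c \<partial>MS S)
       = (\<integral>\<^sup>+s. ennreal (w s * s^(card S + 0)) * indicator {0<..} s \<partial>lborel) * Bint S h"
    unfolding Bint_def by (rule GL[OF fin hm _ wnn hom']) (simp add: w_def)
  also have "(\<integral>\<^sup>+s. ennreal (w s * s^(card S + 0)) * indicator {0<..} s \<partial>lborel) = ennreal (real r / real (r + card S))"
    unfolding w_def by (rule radial_outer[OF r])
  also have "(\<integral>\<^sup>+c. (\<integral>\<^sup>+s. ennreal (w s) * indicator {0<..} s * indicator {nsq S c..} s \<partial>lborel) * h c \<partial>MS S)
      = (\<integral>\<^sup>+c. indicator {c. nsq S c \<le> 1} c * ennreal (1 - nsq S c ^ r) * h c \<partial>MS S)"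
  proof (rule nn_integral_cong)
    fix c
    have "(\<integral>\<^sup>+s. ennreal (w s) * indicator {0<..} s * indicator {nsq S c..} s \<partial>lborel)
        = (if nsq S c \<le> 1 then ennreal (1 - nsq S c ^ r) else 0)"
      unfolding w_def by (rule radial_inner[OF nsq_nonneg r])
    then show "(\<integral>\<^sup>+s. ennreal (w s) * indicator {0<..} s * indicator {nsq S c..} s \<partial>lborel) * h c
        = indicator {c. nsq S c \<le> 1} c * ennreal (1 - nsq S c ^ r) * h c"
      by (simp only: indicator_def mem_Collect_eq split: if_split) simp
  qed
  finally have E1: "(\<integral>\<^sup>+c. indicator {c. nsq S c \<le> 1} c * ennreal (1 - nsq S c ^ r) * h c \<partial>MS S)
      = ennreal (real r / real (r + card S)) * Bint S h" .
  have E2: "Bint S (\<lambda>c. ennreal (nsq S c ^ r) * h c) + (\<integral>\<^sup>+c. indicator {c. nsq S c \<le> 1} c * ennreal (1 - nsq S c ^ r) * h c \<partial>MS S)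
      = Bint S h"
    unfolding Bint_def
  proof (subst nn_integral_add[symmetric])
    show "(\<integral>\<^sup>+c. indicator {c. nsq S c \<le> 1} c * (ennreal (nsq S c ^ r) * h c) +
          indicator {c. nsq S c \<le> 1} c * ennreal (1 - nsq S c ^ r) * h c \<partial>MS S) =
          (\<integral>\<^sup>+c. indicator {c. nsq S c \<le> 1} c * h c \<partial>MS S)"
    proof (rule nn_integral_cong)
      fix c
      show "indicator {c. nsq S c \<le> 1} c * (ennreal (nsq S c ^ r) * h c) +
          indicator {c. nsq S c \<le> 1} c * ennreal (1 - nsq S c ^ r) * h c = indicator {c. nsq S c \<le> 1} c * h c"
      proof (cases "nsq S c \<le> 1")
        case True
        have "ennreal (nsq S c ^ r) + ennreal (1 - nsq S c ^ r) = 1"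
          using True nsq_nonneg[of S c] by (simp add: ennreal_plus[symmetric] power_le_one del: ennreal_plus)
        then have "ennreal (nsq S c ^ r) * h c + ennreal (1 - nsq S c ^ r) * h c = h c"
          by (metis distrib_right mult_1)
        then show ?thesis using True by (simp add: mult.assoc)
      qed simp
    qed
  qed measurable
  obtain b where b: "Bint S h = ennreal b" "0 \<le> b"
    using fi ennreal_cases[of "Bint S h"] by auto
  define X where "X = Bint S (\<lambda>c. ennreal (nsq S c ^ r) * h c)"
  have "X \<le> X + (\<integral>\<^sup>+c. indicator {c. nsq S c \<le> 1} c * ennreal (1 - nsq S c ^ r) * h c \<partial>MS S)"
    by (rule add_increasing2) auto
  then have "X \<le> Bint S h" using E2 unfolding X_def by simp
  then have "X < \<infinity>" using fi by (rule le_less_trans)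
  then obtain x where x: "X = ennreal x" "0 \<le> x"
    using ennreal_cases[of X] by auto
  have "ennreal x + ennreal (real r / real (r + card S)) * ennreal b = ennreal b"
    using E2 E1 b x unfolding X_def by simp
  moreover have "ennreal (x + real r / real (r + card S) * b) = ennreal x + ennreal (real r / real (r + card S)) * ennreal b"
  proof -
    have q: "0 \<le> real r / real (r + card S)" by simp
    have "ennreal (x + real r / real (r + card S) * b) = ennreal x + ennreal (real r / real (r + card S) * b)"
      by (rule ennreal_plus) (use b x q in auto)
    also have "ennreal (real r / real (r + card S) * b) = ennreal (real r / real (r + card S)) * ennreal b"
      by (rule ennreal_mult) (use b q in auto)
    finally show ?thesis .
  qed
  ultimately have "ennreal (x + real r / real (r + card S) * b) = ennreal b" by simp
  then have "x + real r / real (r + card S) * b = b"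
    using b x by (subst (asm) ennreal_inj) (auto intro!: add_nonneg_nonneg)
  then have "x = real (card S) / real (card S + r) * b"
    using r by (auto simp: field_simps)
  moreover have "ennreal (real (card S) / real (card S + r) * b) = ennreal (real (card S) / real (card S + r)) * ennreal b"
    by (rule ennreal_mult) (use b in auto)
  ultimately show ?thesis using x b unfolding X_def by simp
qed



lemma gauss_total:
  assumes "finite S"
  shows "(\<integral>\<^sup>+c. ennreal (exp (- nsq S c)) \<partial>MS S) = ennreal (pi ^ card S)"
proof -
  have "(\<lambda>c. ennreal (exp (- nsq S c))) = (\<lambda>c. \<Prod>s\<in>S. ennreal (exp (- (cmod (c s))\<^sup>2)))"
    using assms by (simp add: nsq_def exp_sum[symmetric] prod_ennreal sum_negf)
  then have "(\<integral>\<^sup>+c. ennreal (exp (- nsq S c)) \<partial>MS S) = (\<Prod>s\<in>S. (\<integral>\<^sup>+z. ennreal (exp (- (cmod z)\<^sup>2)) \<partial>lborel))"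
    using CPS.product_nn_integral_prod[OF assms, of "\<lambda>_ z. ennreal (exp (- (cmod z)\<^sup>2))"] by simp
  then show ?thesis by (simp add: gauss_complex prod_ennreal ennreal_power)
qed

lemma ball_vol:
  assumes "finite S"
  shows "Bint S (\<lambda>_. 1) = ennreal (pi ^ card S / fact (card S))"
proof -
  have "(\<integral>\<^sup>+c. ennreal (exp (- nsq S c)) * 1 \<partial>MS S) = ennreal (fact (card S + 0)) * Bint S (\<lambda>_. 1)"
    by (rule gauss_ball[OF assms]) auto
  then have "ennreal (pi ^ card S) = ennreal (fact (card S)) * Bint S (\<lambda>_. 1)"
    using gauss_total[OF assms] by simp
  then have "Bint S (\<lambda>_. 1) = ennreal (pi ^ card S) / ennreal (fact (card S))"
    by (metis ennreal_eq_0_iff ennreal_neq_top fact_gt_zero ennreal_mult_divide_eq mult.commute not_less order_refl)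
  then show ?thesis by (simp add: divide_ennreal)
qed

lemma fact_ratio:
  fixes d l :: nat assumes "d \<ge> 1"
  shows "real (fact (d + l)) * (real d / real (d + l)) * (pi ^ d / real (fact d))
       = pi ^ d * real (fact (d + l - 1)) / real (fact (d - 1))"
proof -
  obtain e where e: "d = Suc e" using assms by (cases d) auto
  define F :: real where "F = fact (e + l)"
  define G :: real where "G = fact e"
  have G: "G > 0" unfolding G_def by simp
  have h1: "real (fact (d + l)) = real (Suc e + l) * F"
  proof -
    have "(fact (d + l) :: nat) = (Suc e + l) * fact (e + l)" unfolding e by simp
    then show ?thesis unfolding F_def by (metis of_nat_fact of_nat_mult)
  qed
  have h2: "real (fact d) = real (Suc e) * G"
  proof -
    have "(fact d :: nat) = (Suc e) * fact e" unfolding e by simp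
    then show ?thesis unfolding G_def by (metis of_nat_fact of_nat_mult)
  qed
  have h3: "real (fact (d + l - 1)) = F" "real (fact (d - 1)) = G" unfolding e F_def G_def by (simp_all add: of_nat_fact)
  show ?thesis unfolding h1 h2 h3 unfolding e using G
    by (simp add: field_simps del: of_nat_Suc)
qed

lemma gauss_moment:
  assumes fin: "finite U" and ne: "U \<noteq> {}"
  shows "(\<integral>\<^sup>+z. ennreal (exp (- nsq U z)) * ennreal (nsq U z ^ l) \<partial>MS U)
       = ennreal (pi ^ card U * real (fact (card U + l - 1)) / real (fact (card U - 1)))"
proof -
  have d: "card U \<ge> 1" using fin ne by (simp add: Suc_le_eq card_gt_0_iff)
  have "(\<integral>\<^sup>+z. ennreal (exp (- nsq U z)) * ennreal (nsq U z ^ l) \<partial>MS U)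
      = ennreal (fact (card U + l)) * Bint U (\<lambda>z. ennreal (nsq U z ^ l))"
  proof (rule gauss_ball[OF fin])
    fix c :: "'a \<Rightarrow> complex" and t :: real assume "t > 0"
    show "ennreal (nsq U (\<lambda>s\<in>U. t *\<^sub>R c s) ^ l) = ennreal (t ^ (2 * l)) * ennreal (nsq U c ^ l)"
      using \<open>t > 0\<close> by (simp add: nsq_scale power_mult_distrib power_mult ennreal_mult nsq_nonneg)
  qed measurable
  also have "Bint U (\<lambda>z. ennreal (nsq U z ^ l)) = Bint U (\<lambda>z. ennreal (nsq U z ^ l) * 1)" by simp
  also have "\<dots> = ennreal (real (card U) / real (card U + l)) * Bint U (\<lambda>_. 1)"
    by (rule radial[OF fin ne]) (auto simp: ball_vol[OF fin])
  also have "Bint U (\<lambda>_. 1) = ennreal (pi ^ card U / fact (card U))" by (rule ball_vol[OF fin])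
  finally show ?thesis
    using fact_ratio[OF d, of l] by (simp add: ennreal_mult[symmetric] mult.assoc[symmetric])
qed

lemma nsq_upd': "finite S \<Longrightarrow> i \<notin> S \<Longrightarrow> nsq (insert i S) (x(i := y)) = (cmod y)\<^sup>2 + nsq S x"
  unfolding nsq_def by (simp add: sum.insert_if) (rule sum.cong, auto)

lemma group_one:
  fixes G :: "complex \<Rightarrow> ennreal"
  assumes "finite V" "V \<noteq> {}" "G \<in> borel_measurable borel"
  shows "(\<integral>\<^sup>+c. ennreal (exp (- nsq V c)) * G (\<Sum>v\<in>V. c v) \<partial>MS V)
       = ennreal (pi ^ (card V - 1)) * (\<integral>\<^sup>+w. ennreal (exp (-(cmod w)\<^sup>2)) * G (sqrt (card V) *\<^sub>R w) \<partial>lborel)"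
  using assms
proof (induction V arbitrary: G rule: finite_ne_induct)
  case (singleton v)
  note [measurable] = singleton
  have "(\<integral>\<^sup>+c. ennreal (exp (- nsq {v} c)) * G (\<Sum>v\<in>{v}. c v) \<partial>MS {v})
      = (\<integral>\<^sup>+c. (\<lambda>z. ennreal (exp (-(cmod z)\<^sup>2)) * G z) (c v) \<partial>MS {v})"
    by (simp add: nsq_def)
  also have "\<dots> = (\<integral>\<^sup>+z. ennreal (exp (-(cmod z)\<^sup>2)) * G z \<partial>lborel)"
    by (rule CPS.product_nn_integral_singleton) measurable
  finally show ?case by simp
next
  case (insert v0 V)
  note [measurable] = insert.prems
  define k where "k = card V"
  have k: "k \<ge> 1" using insert.hyps by (simp add: k_def Suc_le_eq card_gt_0_iff)
  have ck: "card (insert v0 V) = Suc k" using insert.hyps by (simp add: k_def)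
  interpret SF: sigma_finite_measure "MS V" using sigma_finite_MS[OF insert.hyps(1)] .
  interpret P: pair_sigma_finite "MS V" "lborel :: complex measure" by unfold_locales
  have sumupd: "(\<Sum>v\<in>insert v0 V. (x(v0 := y)) v) = (\<Sum>v\<in>V. x v) + y" for x :: "'a \<Rightarrow> complex" and y
    using insert.hyps by (simp add: add.commute) (rule sum.cong, auto)
  have "(\<integral>\<^sup>+c. ennreal (exp (- nsq (insert v0 V) c)) * G (\<Sum>v\<in>insert v0 V. c v) \<partial>MS (insert v0 V))
      = (\<integral>\<^sup>+x. \<integral>\<^sup>+y. ennreal (exp (- nsq (insert v0 V) (x(v0 := y)))) * G (\<Sum>v\<in>insert v0 V. (x(v0 := y)) v) \<partial>lborel \<partial>MS V)"
    by (rule CPS.product_nn_integral_insert) (use insert.hyps in auto)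
  also have "\<dots> = (\<integral>\<^sup>+x. \<integral>\<^sup>+y. ennreal (exp (-(cmod y)\<^sup>2)) * (ennreal (exp (- nsq V x)) * G ((\<Sum>v\<in>V. x v) + y)) \<partial>lborel \<partial>MS V)"
    by (simp only: nsq_upd'[OF insert.hyps(1) insert.hyps(3)] sumupd)
       (simp add: exp_diff exp_minus ennreal_mult mult_ac divide_inverse)
  also have "\<dots> = (\<integral>\<^sup>+y. \<integral>\<^sup>+x. ennreal (exp (-(cmod y)\<^sup>2)) * (ennreal (exp (- nsq V x)) * G ((\<Sum>v\<in>V. x v) + y)) \<partial>MS V \<partial>lborel)"
    by (rule P.Fubini'[symmetric]) measurable
  also have "\<dots> = (\<integral>\<^sup>+y. ennreal (exp (-(cmod y)\<^sup>2)) * (ennreal (pi ^ (k - 1)) * (\<integral>\<^sup>+w. ennreal (exp (-(cmod w)\<^sup>2)) * G (sqrt k *\<^sub>R w + y) \<partial>lborel)) \<partial>lborel)"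
  proof (rule nn_integral_cong)
    fix y :: complex
    have "(\<integral>\<^sup>+x. ennreal (exp (- nsq V x)) * (\<lambda>z. G (z + y)) (\<Sum>v\<in>V. x v) \<partial>MS V)
        = ennreal (pi ^ (card V - 1)) * (\<integral>\<^sup>+w. ennreal (exp (-(cmod w)\<^sup>2)) * (\<lambda>z. G (z + y)) (sqrt (card V) *\<^sub>R w) \<partial>lborel)"
      by (rule insert.IH) measurable
    then show "(\<integral>\<^sup>+x. ennreal (exp (-(cmod y)\<^sup>2)) * (ennreal (exp (- nsq V x)) * G ((\<Sum>v\<in>V. x v) + y)) \<partial>MS V)
        = ennreal (exp (-(cmod y)\<^sup>2)) * (ennreal (pi ^ (k - 1)) * (\<integral>\<^sup>+w. ennreal (exp (-(cmod w)\<^sup>2)) * G (sqrt k *\<^sub>R w + y) \<partial>lborel))"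
      by (subst nn_integral_cmult) (measurable, simp add: k_def)
  qed
  also have "\<dots> = ennreal (pi ^ (k - 1)) * (\<integral>\<^sup>+y. \<integral>\<^sup>+w. ennreal (exp (-(cmod y)\<^sup>2 - (cmod w)\<^sup>2)) * G (sqrt k *\<^sub>R w + y) \<partial>lborel \<partial>lborel)"
    by (subst nn_integral_cmult[symmetric], measurable)
       (auto intro!: nn_integral_cong simp: nn_integral_cmult[symmetric] exp_diff ennreal_mult[symmetric] mult_ac divide_inverse exp_minus)
  also have "(\<integral>\<^sup>+y. \<integral>\<^sup>+w. ennreal (exp (-(cmod y)\<^sup>2 - (cmod w)\<^sup>2)) * G (sqrt k *\<^sub>R w + y) \<partial>lborel \<partial>lborel)
      = ennreal pi * (\<integral>\<^sup>+u. ennreal (exp (-(cmod u)\<^sup>2)) * G (sqrt ((sqrt k)\<^sup>2 + 1) *\<^sub>R u) \<partial>lborel)"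
    by (rule rot2) auto
  moreover have pk: "pi ^ (k - Suc 0) * pi = pi ^ k" using k by (cases k) (simp_all add: mult.commute)
  ultimately show ?case
    using k by (simp add: ck mult.assoc[symmetric] ennreal_mult[symmetric] power_Suc[symmetric] add.commute)
qed

lemma nsq_union: "finite A \<Longrightarrow> finite B \<Longrightarrow> A \<inter> B = {} \<Longrightarrow>
   nsq (A \<union> B) (merge A B (x, y)) = nsq A x + nsq B y"
  unfolding nsq_def by (subst sum.union_disjoint) (auto intro!: sum.cong simp: merge_def)

lemma upd_meas[measurable]:
  fixes F :: "('u \<Rightarrow> complex) \<Rightarrow> ennreal"
  assumes "u0 \<notin> U" "F \<in> borel_measurable (MS (insert u0 U))"
  shows "(\<lambda>z. F (z(u0 := v))) \<in> borel_measurable (MS U)"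
proof -
  note [measurable] = assms(2)
  have "(\<lambda>z. \<lambda>u\<in>insert u0 U. if u = u0 then v else z u) \<in> MS U \<rightarrow>\<^sub>M MS (insert u0 U)"
  proof (rule measurable_restrict)
    fix u assume u: "u \<in> insert u0 U"
    show "(\<lambda>z. if u = u0 then v else z u) \<in> MS U \<rightarrow>\<^sub>M lborel"
    proof (cases "u = u0")
      case False
      then have "u \<in> U" using u by auto
      then show ?thesis using False by simp
    qed simp
  qed
  from measurable_comp[OF this assms(2)]
  have "(\<lambda>z. F (\<lambda>u\<in>insert u0 U. if u = u0 then v else z u)) \<in> borel_measurable (MS U)"
    by (simp add: comp_def)
  moreover have "z(u0 := v) = (\<lambda>u\<in>insert u0 U. if u = u0 then v else z u)" if "z \<in> space (MS U)" for z
    using that assms(1) by (auto simp: space_PiM PiE_def extensional_def fun_eq_iff)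
  ultimately show ?thesis by (simp cong: measurable_cong)
qed

lemma group_many:
  fixes F :: "('u \<Rightarrow> complex) \<Rightarrow> ennreal" and key :: "'i \<Rightarrow> 'u" and T :: "'i set"
  assumes "finite U" "finite T" "\<forall>u\<in>U. card {x\<in>T. key x = u} = m" "m \<ge> 1" "\<forall>x\<in>T. key x \<in> U"
    "F \<in> borel_measurable (MS U)"
  shows "(\<integral>\<^sup>+c. ennreal (exp (- nsq T c)) * F (\<lambda>u\<in>U. \<Sum>x\<in>{x\<in>T. key x = u}. c x) \<partial>MS T)
       = ennreal (pi ^ ((m-1) * card U)) * (\<integral>\<^sup>+z. ennreal (exp (- nsq U z)) * F (\<lambda>u\<in>U. sqrt m *\<^sub>R z u) \<partial>MS U)"
  using assms
proof (induction U arbitrary: T F rule: finite_induct)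
  case empty
  then have T: "T = {}" by auto
  show ?case unfolding T by (simp add: nsq_def space_PiM_empty nn_integral_const)
next
  case (insert u0 U)
  note [measurable] = insert.prems(5)
  define T0 where "T0 = {x\<in>T. key x = u0}"
  define T' where "T' = {x\<in>T. key x \<in> U}"
  have TT: "T = T' \<union> T0" "T' \<inter> T0 = {}" using insert.prems(4) insert.hyps(2) by (auto simp: T0_def T'_def)
  have fin: "finite T'" "finite T0" using insert.prems(1) by (auto simp: T0_def T'_def)
  have cT0: "card T0 = m" using insert.prems(2) by (simp add: T0_def)
  have T0ne: "T0 \<noteq> {}" using cT0 insert.prems(3) by auto
  have fib: "{x\<in>T. key x = u} = {x\<in>T'. key x = u}" if "u \<in> U" for u using that by (auto simp: T'_def)
  interpret SF: sigma_finite_measure "MS T'" using sigma_finite_MS[OF fin(1)] .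
  interpret P: pair_sigma_finite "MS T'" "lborel :: complex measure" by unfold_locales
  interpret SF2: sigma_finite_measure "MS U" using sigma_finite_MS[OF insert.hyps(1)] .
  interpret P2: pair_sigma_finite "MS U" "lborel :: complex measure" by unfold_locales
  define A where "A x = (\<lambda>u\<in>U. \<Sum>x'\<in>{x'\<in>T'. key x' = u}. x x')" for x :: "'i \<Rightarrow> complex"
  have Am[measurable]: "A \<in> MS T' \<rightarrow>\<^sub>M MS U" unfolding A_def by measurable
  have mergeA: "(\<lambda>u\<in>insert u0 U. \<Sum>x\<in>{x\<in>T. key x = u}. merge T' T0 (x', y) x) = (A x')(u0 := (\<Sum>v\<in>T0. y v))"
    for x' y
  proof
    fix u show "(\<lambda>u\<in>insert u0 U. \<Sum>x\<in>{x\<in>T. key x = u}. merge T' T0 (x', y) x) u = ((A x')(u0 := (\<Sum>v\<in>T0. y v))) u"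
    proof (cases "u = u0")
      case True
      then show ?thesis using TT(2) by (auto simp: T0_def intro!: sum.cong)
    next
      case False
      then show ?thesis using TT(2) fib by (auto simp: A_def T'_def intro!: sum.cong)
    qed
  qed
  have "(\<integral>\<^sup>+c. ennreal (exp (- nsq T c)) * F (\<lambda>u\<in>insert u0 U. \<Sum>x\<in>{x\<in>T. key x = u}. c x) \<partial>MS T)
    = (\<integral>\<^sup>+x. \<integral>\<^sup>+y. ennreal (exp (- nsq T (merge T' T0 (x, y)))) * F (\<lambda>u\<in>insert u0 U. \<Sum>x'\<in>{x\<in>T. key x = u}. merge T' T0 (x, y) x') \<partial>MS T0 \<partial>MS T')"
    unfolding TT(1)[symmetric]
    by (rule CPS.product_nn_integral_fold[OF TT(2) fin, unfolded TT(1)[symmetric]]) measurable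
  also have "\<dots> = (\<integral>\<^sup>+x. ennreal (exp (- nsq T' x)) * (\<integral>\<^sup>+y. ennreal (exp (- nsq T0 y)) * (\<lambda>s. F ((A x)(u0 := s))) (\<Sum>v\<in>T0. y v) \<partial>MS T0) \<partial>MS T')"
  proof (rule nn_integral_cong)
    fix x assume x: "x \<in> space (MS T')"
    have "(\<integral>\<^sup>+y. ennreal (exp (- nsq T (merge T' T0 (x, y)))) * F (\<lambda>u\<in>insert u0 U. \<Sum>x'\<in>{x\<in>T. key x = u}. merge T' T0 (x, y) x') \<partial>MS T0)
       = (\<integral>\<^sup>+y. ennreal (exp (- nsq T' x)) * (ennreal (exp (- nsq T0 y)) * F ((A x)(u0 := (\<Sum>v\<in>T0. y v)))) \<partial>MS T0)"
      unfolding mergeA nsq_union[OF fin TT(2), folded TT(1)]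
      by (simp add: exp_diff exp_minus ennreal_mult divide_inverse mult_ac)
    also have "\<dots> = ennreal (exp (- nsq T' x)) * (\<integral>\<^sup>+y. ennreal (exp (- nsq T0 y)) * F ((A x)(u0 := (\<Sum>v\<in>T0. y v))) \<partial>MS T0)"
      using x by (intro nn_integral_cmult) measurable
    finally show "(\<integral>\<^sup>+y. ennreal (exp (- nsq T (merge T' T0 (x, y)))) * F (\<lambda>u\<in>insert u0 U. \<Sum>x'\<in>{x\<in>T. key x = u}. merge T' T0 (x, y) x') \<partial>MS T0)
       = ennreal (exp (- nsq T' x)) * (\<integral>\<^sup>+y. ennreal (exp (- nsq T0 y)) * (\<lambda>s. F ((A x)(u0 := s))) (\<Sum>v\<in>T0. y v) \<partial>MS T0)"
      by simp
  qed
  also have "\<dots> = (\<integral>\<^sup>+x. ennreal (exp (- nsq T' x)) * (ennreal (pi ^ (m - 1)) * (\<integral>\<^sup>+w. ennreal (exp (-(cmod w)\<^sup>2)) * F ((A x)(u0 := sqrt m *\<^sub>R w)) \<partial>lborel)) \<partial>MS T')"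
  proof (rule nn_integral_cong)
    fix x assume x: "x \<in> space (MS T')"
    have Ax: "A x \<in> space (MS U)" using measurable_space[OF Am x] .
    have [measurable]: "(\<lambda>s. F ((A x)(u0 := s))) \<in> borel_measurable borel"
      using measurable_comp[OF measurable_component_update[OF Ax insert.hyps(2)] insert.prems(5)]
      by (simp add: comp_def)
    show "ennreal (exp (- nsq T' x)) * (\<integral>\<^sup>+y. ennreal (exp (- nsq T0 y)) * (\<lambda>s. F ((A x)(u0 := s))) (\<Sum>v\<in>T0. y v) \<partial>MS T0)
       = ennreal (exp (- nsq T' x)) * (ennreal (pi ^ (m - 1)) * (\<integral>\<^sup>+w. ennreal (exp (-(cmod w)\<^sup>2)) * F ((A x)(u0 := sqrt m *\<^sub>R w)) \<partial>lborel))"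
      by (subst group_one[OF fin(2) T0ne]) (measurable, simp add: cT0)
  qed
  also have "\<dots> = ennreal (pi ^ (m - 1)) * (\<integral>\<^sup>+x. \<integral>\<^sup>+w. ennreal (exp (-(cmod w)\<^sup>2)) * (ennreal (exp (- nsq T' x)) * F ((A x)(u0 := sqrt m *\<^sub>R w))) \<partial>lborel \<partial>MS T')"
    by (subst nn_integral_cmult[symmetric], measurable)
       (auto intro!: nn_integral_cong simp: nn_integral_cmult[symmetric] mult_ac)
  also have "(\<integral>\<^sup>+x. \<integral>\<^sup>+w. ennreal (exp (-(cmod w)\<^sup>2)) * (ennreal (exp (- nsq T' x)) * F ((A x)(u0 := sqrt m *\<^sub>R w))) \<partial>lborel \<partial>MS T')
     = (\<integral>\<^sup>+w. \<integral>\<^sup>+x. ennreal (exp (-(cmod w)\<^sup>2)) * (ennreal (exp (- nsq T' x)) * F ((A x)(u0 := sqrt m *\<^sub>R w))) \<partial>MS T' \<partial>lborel)"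
    by (rule P.Fubini'[symmetric]) measurable
  also have "\<dots> = (\<integral>\<^sup>+w. ennreal (exp (-(cmod w)\<^sup>2)) * (ennreal (pi ^ ((m-1) * card U)) * (\<integral>\<^sup>+z. ennreal (exp (- nsq U z)) * F ((\<lambda>u\<in>U. sqrt m *\<^sub>R z u)(u0 := sqrt m *\<^sub>R w)) \<partial>MS U)) \<partial>lborel)"
  proof (rule nn_integral_cong)
    fix w :: complex
    have IH: "(\<integral>\<^sup>+x. ennreal (exp (- nsq T' x)) * (\<lambda>z. F (z(u0 := sqrt m *\<^sub>R w))) (\<lambda>u\<in>U. \<Sum>x'\<in>{x'\<in>T'. key x' = u}. x x') \<partial>MS T')
       = ennreal (pi ^ ((m-1) * card U)) * (\<integral>\<^sup>+z. ennreal (exp (- nsq U z)) * (\<lambda>z. F (z(u0 := sqrt m *\<^sub>R w))) (\<lambda>u\<in>U. sqrt m *\<^sub>R z u) \<partial>MS U)"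
    proof (rule insert.IH)
      show "\<forall>u\<in>U. card {x \<in> T'. key x = u} = m" using insert.prems(2) fib by auto
      show "\<forall>x\<in>T'. key x \<in> U" by (auto simp: T'_def)
    qed (use fin insert.prems(3) insert.hyps(2) upd_meas[OF insert.hyps(2) insert.prems(5)] in \<open>auto\<close>)
    show "(\<integral>\<^sup>+x. ennreal (exp (-(cmod w)\<^sup>2)) * (ennreal (exp (- nsq T' x)) * F ((A x)(u0 := sqrt m *\<^sub>R w))) \<partial>MS T')
       = ennreal (exp (-(cmod w)\<^sup>2)) * (ennreal (pi ^ ((m-1) * card U)) * (\<integral>\<^sup>+z. ennreal (exp (- nsq U z)) * F ((\<lambda>u\<in>U. sqrt m *\<^sub>R z u)(u0 := sqrt m *\<^sub>R w)) \<partial>MS U))"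
    proof -
      have Fw: "(\<lambda>z. F (z(u0 := sqrt m *\<^sub>R w))) \<in> borel_measurable (MS U)"
        by (rule upd_meas[OF insert.hyps(2) insert.prems(5)])
      have mx1: "(\<lambda>x. F ((A x)(u0 := sqrt m *\<^sub>R w))) \<in> borel_measurable (MS T')"
        using measurable_comp[OF Am Fw] by (simp add: comp_def)
      have "(\<integral>\<^sup>+x. ennreal (exp (-(cmod w)\<^sup>2)) * (ennreal (exp (- nsq T' x)) * F ((A x)(u0 := sqrt m *\<^sub>R w))) \<partial>MS T')
         = ennreal (exp (-(cmod w)\<^sup>2)) * (\<integral>\<^sup>+x. ennreal (exp (- nsq T' x)) * F ((A x)(u0 := sqrt m *\<^sub>R w)) \<partial>MS T')"
        by (rule nn_integral_cmult) (use mx1 in measurable)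
      also have "(\<integral>\<^sup>+x. ennreal (exp (- nsq T' x)) * F ((A x)(u0 := sqrt m *\<^sub>R w)) \<partial>MS T')
         = ennreal (pi ^ ((m-1) * card U)) * (\<integral>\<^sup>+z. ennreal (exp (- nsq U z)) * F ((\<lambda>u\<in>U. sqrt m *\<^sub>R z u)(u0 := sqrt m *\<^sub>R w)) \<partial>MS U)"
        using IH unfolding A_def by simp
      finally show ?thesis .
    qed
  qed
  also have "\<dots> = ennreal (pi ^ ((m-1) * card U)) * (\<integral>\<^sup>+w. \<integral>\<^sup>+z. ennreal (exp (- nsq (insert u0 U) (z(u0 := w)))) * F (\<lambda>u\<in>insert u0 U. sqrt m *\<^sub>R (z(u0 := w)) u) \<partial>MS U \<partial>lborel)"
  proof -
    define f where "f z = ennreal (exp (- nsq (insert u0 U) z)) * F (\<lambda>u\<in>insert u0 U. sqrt m *\<^sub>R z u)" for z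
    have fm[measurable]: "f \<in> borel_measurable (MS (insert u0 U))" unfolding f_def by measurable
    have eq: "(\<lambda>u\<in>insert u0 U. sqrt m *\<^sub>R (z(u0 := w)) u) = (\<lambda>u\<in>U. sqrt m *\<^sub>R z u)(u0 := sqrt m *\<^sub>R w)" for z w
      using insert.hyps(2) by (auto simp: fun_eq_iff)
    have feq: "f (z(u0 := w)) = ennreal (exp (-(cmod w)\<^sup>2)) * (ennreal (exp (- nsq U z)) * F ((\<lambda>u\<in>U. sqrt m *\<^sub>R z u)(u0 := sqrt m *\<^sub>R w)))" for z w
      unfolding f_def eq nsq_upd'[OF insert.hyps(1,2)]
      by (simp add: exp_diff exp_minus ennreal_mult divide_inverse mult_ac)
    have "(\<integral>\<^sup>+w. ennreal (exp (-(cmod w)\<^sup>2)) * (ennreal (pi ^ ((m-1) * card U)) * (\<integral>\<^sup>+z. ennreal (exp (- nsq U z)) * F ((\<lambda>u\<in>U. sqrt m *\<^sub>R z u)(u0 := sqrt m *\<^sub>R w)) \<partial>MS U)) \<partial>lborel)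
       = (\<integral>\<^sup>+w. ennreal (pi ^ ((m-1) * card U)) * (\<integral>\<^sup>+z. f (z(u0 := w)) \<partial>MS U) \<partial>lborel)"
    proof (rule nn_integral_cong)
      fix w :: complex
      have Fw: "(\<lambda>z. F (z(u0 := sqrt m *\<^sub>R w))) \<in> borel_measurable (MS U)"
        by (rule upd_meas[OF insert.hyps(2) insert.prems(5)])
      have sc: "(\<lambda>z. \<lambda>u\<in>U. sqrt m *\<^sub>R z u) \<in> MS U \<rightarrow>\<^sub>M MS U" by measurable
      have mz: "(\<lambda>z. F ((\<lambda>u\<in>U. sqrt m *\<^sub>R z u)(u0 := sqrt m *\<^sub>R w))) \<in> borel_measurable (MS U)"
        using measurable_comp[OF sc Fw] by (simp add: comp_def)
      have "(\<integral>\<^sup>+z. f (z(u0 := w)) \<partial>MS U) = ennreal (exp (-(cmod w)\<^sup>2)) * (\<integral>\<^sup>+z. ennreal (exp (- nsq U z)) * F ((\<lambda>u\<in>U. sqrt m *\<^sub>R z u)(u0 := sqrt m *\<^sub>R w)) \<partial>MS U)"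
        unfolding feq by (rule nn_integral_cmult) (use mz in measurable)
      then show "ennreal (exp (-(cmod w)\<^sup>2)) * (ennreal (pi ^ ((m-1) * card U)) * (\<integral>\<^sup>+z. ennreal (exp (- nsq U z)) * F ((\<lambda>u\<in>U. sqrt m *\<^sub>R z u)(u0 := sqrt m *\<^sub>R w)) \<partial>MS U))
        = ennreal (pi ^ ((m-1) * card U)) * (\<integral>\<^sup>+z. f (z(u0 := w)) \<partial>MS U)"
        by (simp add: mult_ac)
    qed
    also have "\<dots> = ennreal (pi ^ ((m-1) * card U)) * (\<integral>\<^sup>+w. \<integral>\<^sup>+z. f (z(u0 := w)) \<partial>MS U \<partial>lborel)"
      by (rule nn_integral_cmult) (use insert.hyps in measurable)
    finally show ?thesis unfolding f_def .
  qed
  also have "(\<integral>\<^sup>+w. \<integral>\<^sup>+z. ennreal (exp (- nsq (insert u0 U) (z(u0 := w)))) * F (\<lambda>u\<in>insert u0 U. sqrt m *\<^sub>R (z(u0 := w)) u) \<partial>MS U \<partial>lborel)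
     = (\<integral>\<^sup>+z. ennreal (exp (- nsq (insert u0 U) z)) * F (\<lambda>u\<in>insert u0 U. sqrt m *\<^sub>R z u) \<partial>MS (insert u0 U))"
    by (rule CPS.product_nn_integral_insert_rev[symmetric]) (use insert.hyps in auto)
  finally have X: "(\<integral>\<^sup>+c. ennreal (exp (- nsq T c)) * F (\<lambda>u\<in>insert u0 U. \<Sum>x\<in>{x\<in>T. key x = u}. c x) \<partial>MS T)
     = ennreal (pi ^ (m - 1)) * (ennreal (pi ^ ((m-1) * card U)) * (\<integral>\<^sup>+z. ennreal (exp (- nsq (insert u0 U) z)) * F (\<lambda>u\<in>insert u0 U. sqrt m *\<^sub>R z u) \<partial>MS (insert u0 U)))" .
  have PP: "ennreal (pi ^ (m - 1)) * ennreal (pi ^ ((m-1) * card U)) = ennreal (pi ^ ((m-1) * card (insert u0 U)))"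
    using insert.hyps by (simp add: ennreal_mult[symmetric] power_add[symmetric])
  show ?case using X by (simp only: mult.assoc[symmetric] PP)
qed

lemma prod_restrict_meas:
  fixes F :: "'j \<Rightarrow> ('i \<Rightarrow> complex) \<Rightarrow> ennreal"
  assumes "\<And>i. i \<in> I \<Longrightarrow> F i \<in> borel_measurable (MS (T i))" "\<And>i. i \<in> I \<Longrightarrow> T i \<subseteq> S"
  shows "(\<lambda>c. \<Prod>i\<in>I. F i (restrict c (T i))) \<in> borel_measurable (MS S)"
proof (rule borel_measurable_prod_ennreal)
  fix i assume i: "i \<in> I"
  show "(\<lambda>c. F i (restrict c (T i))) \<in> borel_measurable (MS S)"
    using measurable_comp[OF measurable_restrict_subset[OF assms(2)[OF i]] assms(1)[OF i]]
    by (simp add: comp_def)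
qed

lemma blocks:
  fixes T :: "'j \<Rightarrow> 'i set" and F :: "'j \<Rightarrow> ('i \<Rightarrow> complex) \<Rightarrow> ennreal"
  assumes "finite I" "\<And>i. i \<in> I \<Longrightarrow> finite (T i)" "disjoint_family_on T I"
    "\<And>i. i \<in> I \<Longrightarrow> F i \<in> borel_measurable (MS (T i))"
  shows "(\<integral>\<^sup>+c. ennreal (exp (- nsq (\<Union>i\<in>I. T i) c)) * (\<Prod>i\<in>I. F i (restrict c (T i))) \<partial>MS (\<Union>i\<in>I. T i))
       = (\<Prod>i\<in>I. \<integral>\<^sup>+c. ennreal (exp (- nsq (T i) c)) * F i c \<partial>MS (T i))"
  using assms
proof (induction I rule: finite_induct)
  case empty
  then show ?case by (simp add: nsq_def space_PiM_empty nn_integral_const)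
next
  case (insert j I)
  define S where "S = (\<Union>i\<in>I. T i)"
  have finS: "finite S" using insert by (auto simp: S_def)
  have finj: "finite (T j)" using insert by auto
  have disj: "S \<inter> T j = {}" using insert.prems(2) insert.hyps(2)
    by (auto simp: S_def disjoint_family_on_def)
  have U: "(\<Union>i\<in>insert j I. T i) = S \<union> T j" by (auto simp: S_def)
  have dI: "disjoint_family_on T I" using insert.prems(2) by (auto simp: disjoint_family_on_def)
  have Fm[measurable]: "F j \<in> borel_measurable (MS (T j))" using insert.prems(3) by auto
  have PM: "(\<lambda>c. \<Prod>i\<in>I. F i (restrict c (T i))) \<in> borel_measurable (MS S)"
    by (rule prod_restrict_meas) (use insert.prems(3) in \<open>auto simp: S_def\<close>)
  have PM2: "(\<lambda>c. \<Prod>i\<in>insert j I. F i (restrict c (T i))) \<in> borel_measurable (MS (S \<union> T j))"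
    by (rule prod_restrict_meas) (use insert.prems(3) in \<open>auto simp: S_def\<close>)
  have "(\<integral>\<^sup>+c. ennreal (exp (- nsq (S \<union> T j) c)) * (\<Prod>i\<in>insert j I. F i (restrict c (T i))) \<partial>MS (S \<union> T j))
     = (\<integral>\<^sup>+x. \<integral>\<^sup>+y. ennreal (exp (- nsq (S \<union> T j) (merge S (T j) (x, y)))) * (\<Prod>i\<in>insert j I. F i (restrict (merge S (T j) (x, y)) (T i))) \<partial>MS (T j) \<partial>MS S)"
    by (rule CPS.product_nn_integral_fold[OF disj finS finj]) (use PM2 in measurable)
  also have "\<dots> = (\<integral>\<^sup>+x. (ennreal (exp (- nsq S x)) * (\<Prod>i\<in>I. F i (restrict x (T i)))) * (\<integral>\<^sup>+y. ennreal (exp (- nsq (T j) y)) * F j y \<partial>MS (T j)) \<partial>MS S)"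
  proof (rule nn_integral_cong)
    fix x assume x: "x \<in> space (MS S)"
    have r1: "restrict (merge S (T j) (x, y)) (T i) = restrict x (T i)" if "i \<in> I" for i y
      using that by (auto simp: fun_eq_iff merge_def S_def)
    have r2: "restrict (merge S (T j) (x, y)) (T j) = y" if "y \<in> space (MS (T j))" for y
      using that disj by (auto simp: fun_eq_iff merge_def space_PiM PiE_def extensional_def)
    have "(\<integral>\<^sup>+y. ennreal (exp (- nsq (S \<union> T j) (merge S (T j) (x, y)))) * (\<Prod>i\<in>insert j I. F i (restrict (merge S (T j) (x, y)) (T i))) \<partial>MS (T j))
        = (\<integral>\<^sup>+y. (ennreal (exp (- nsq S x)) * (\<Prod>i\<in>I. F i (restrict x (T i)))) * (ennreal (exp (- nsq (T j) y)) * F j y) \<partial>MS (T j))"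
    proof (rule nn_integral_cong)
      fix y assume y: "y \<in> space (MS (T j))"
      have "(\<Prod>i\<in>insert j I. F i (restrict (merge S (T j) (x, y)) (T i))) = F j y * (\<Prod>i\<in>I. F i (restrict x (T i)))"
        using insert.hyps r1 r2[OF y] by (simp add: prod.insert)
      then show "ennreal (exp (- nsq (S \<union> T j) (merge S (T j) (x, y)))) * (\<Prod>i\<in>insert j I. F i (restrict (merge S (T j) (x, y)) (T i)))
          = (ennreal (exp (- nsq S x)) * (\<Prod>i\<in>I. F i (restrict x (T i)))) * (ennreal (exp (- nsq (T j) y)) * F j y)"
        using nsq_union[OF finS finj disj, of x y]
        by (simp add: exp_diff exp_minus ennreal_mult divide_inverse mult_ac)
    qed
    also have "\<dots> = (ennreal (exp (- nsq S x)) * (\<Prod>i\<in>I. F i (restrict x (T i)))) * (\<integral>\<^sup>+y. ennreal (exp (- nsq (T j) y)) * F j y \<partial>MS (T j))"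
      by (rule nn_integral_cmult) measurable
    finally show "(\<integral>\<^sup>+y. ennreal (exp (- nsq (S \<union> T j) (merge S (T j) (x, y)))) * (\<Prod>i\<in>insert j I. F i (restrict (merge S (T j) (x, y)) (T i))) \<partial>MS (T j))
      = (ennreal (exp (- nsq S x)) * (\<Prod>i\<in>I. F i (restrict x (T i)))) * (\<integral>\<^sup>+y. ennreal (exp (- nsq (T j) y)) * F j y \<partial>MS (T j))" .
  qed
  also have "\<dots> = (\<integral>\<^sup>+x. ennreal (exp (- nsq S x)) * (\<Prod>i\<in>I. F i (restrict x (T i))) \<partial>MS S) * (\<integral>\<^sup>+y. ennreal (exp (- nsq (T j) y)) * F j y \<partial>MS (T j))"
    by (rule nn_integral_multc) (use PM in measurable)
  also have "(\<integral>\<^sup>+x. ennreal (exp (- nsq S x)) * (\<Prod>i\<in>I. F i (restrict x (T i))) \<partial>MS S)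
      = (\<Prod>i\<in>I. \<integral>\<^sup>+c. ennreal (exp (- nsq (T i) c)) * F i c \<partial>MS (T i))"
    unfolding S_def by (rule insert.IH) (use insert.prems dI in auto)
  finally show ?case unfolding U using insert.hyps by (simp add: mult.commute)
qed



definition blk :: "nat \<Rightarrow> nat \<Rightarrow> nat \<Rightarrow> nat \<Rightarrow> nat set set" where
  "blk NA NB Q0 QA = {x \<in> charge_sector (NA+NB) Q0. card (x \<inter> {..<NA}) = QA}"
definition Aset :: "nat \<Rightarrow> nat \<Rightarrow> nat set set" where
  "Aset NA QA = {a. a \<subseteq> {..<NA} \<and> card a = QA}"
definition fib :: "nat \<Rightarrow> nat \<Rightarrow> nat \<Rightarrow> nat \<Rightarrow> nat set \<Rightarrow> nat set set" where
  "fib NA NB Q0 QA a = {x \<in> blk NA NB Q0 QA. x \<inter> {..<NA} = a}"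

lemma finite_sector[simp]: "finite (charge_sector N Q)"
proof -
  have "charge_sector N Q \<subseteq> Pow {..<N}" by (auto simp: charge_sector_def)
  then show ?thesis by (rule finite_subset) simp
qed

lemma card_sector: "card (charge_sector N Q) = N choose Q"
  using n_subsets[of "{..<N}" Q] by (simp add: charge_sector_def)

lemma blk_sub: "blk NA NB Q0 QA \<subseteq> charge_sector (NA+NB) Q0" by (auto simp: blk_def)
lemma fib_sub: "fib NA NB Q0 QA a \<subseteq> blk NA NB Q0 QA" by (auto simp: fib_def)
lemma finite_blk[simp]: "finite (blk NA NB Q0 QA)" by (rule finite_subset[OF blk_sub finite_sector])
lemma finite_fib[simp]: "finite (fib NA NB Q0 QA a)" by (rule finite_subset[OF fib_sub finite_blk])
lemma finite_Aset[simp]: "finite (Aset NA QA)"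
  by (rule finite_subset[of _ "Pow {..<NA}"]) (auto simp: Aset_def)
lemma card_Aset: "card (Aset NA QA) = NA choose QA"
  using n_subsets[of "{..<NA}" QA] by (simp add: Aset_def)

lemma card_fib:
  assumes a: "a \<in> Aset NA QA"
  shows "card (fib NA NB Q0 QA a) = (if QA \<le> Q0 then NB choose (Q0 - QA) else 0)"
proof (cases "QA \<le> Q0")
  case False
  have "fib NA NB Q0 QA a = {}"
  proof (rule ccontr)
    assume "fib NA NB Q0 QA a \<noteq> {}"
    then obtain x where x: "x \<in> fib NA NB Q0 QA a" by blast
    then have "finite x" "card x = Q0" "card (x \<inter> {..<NA}) = QA"
      by (auto simp: fib_def blk_def charge_sector_def intro: finite_subset)
    then have "QA \<le> Q0" by (metis card_mono inf_le1)
    then show False using False by simp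
  qed
  then show ?thesis using False by simp
next
  case True
  define B where "B = {NA..<NA+NB}"
  have aA: "a \<subseteq> {..<NA}" "card a = QA" using a by (auto simp: Aset_def)
  have "bij_betw (\<lambda>x. x \<inter> B) (fib NA NB Q0 QA a) {b. b \<subseteq> B \<and> card b = Q0 - QA}"
  proof (rule bij_betw_byWitness[where f' = "\<lambda>b. a \<union> b"])
    show "\<forall>x\<in>fib NA NB Q0 QA a. a \<union> x \<inter> B = x"
      using aA by (auto simp: fib_def blk_def charge_sector_def B_def)
    show "\<forall>b\<in>{b. b \<subseteq> B \<and> card b = Q0 - QA}. (a \<union> b) \<inter> B = b"
      using aA by (auto simp: B_def)
    show "(\<lambda>x. x \<inter> B) ` fib NA NB Q0 QA a \<subseteq> {b. b \<subseteq> B \<and> card b = Q0 - QA}"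
    proof
      fix y assume "y \<in> (\<lambda>x. x \<inter> B) ` fib NA NB Q0 QA a"
      then obtain x where x: "x \<in> fib NA NB Q0 QA a" "y = x \<inter> B" by blast
      then have xs: "x \<subseteq> {..<NA+NB}" "card x = Q0" "x \<inter> {..<NA} = a"
        by (auto simp: fib_def blk_def charge_sector_def)
      have fx: "finite x" using xs(1) finite_subset by blast
      have "x = (x \<inter> {..<NA}) \<union> (x \<inter> B)" using xs(1) by (auto simp: B_def)
      moreover have "(x \<inter> {..<NA}) \<inter> (x \<inter> B) = {}" by (auto simp: B_def)
      ultimately have "card x = card (x \<inter> {..<NA}) + card (x \<inter> B)"
        using fx by (metis card_Un_disjoint finite_Int)
      then have "card (x \<inter> B) = Q0 - QA" using xs aA by simp
      then show "y \<in> {b. b \<subseteq> B \<and> card b = Q0 - QA}" using x by auto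
    qed
    show "(\<lambda>b. a \<union> b) ` {b. b \<subseteq> B \<and> card b = Q0 - QA} \<subseteq> fib NA NB Q0 QA a"
    proof
      fix y assume "y \<in> (\<lambda>b. a \<union> b) ` {b. b \<subseteq> B \<and> card b = Q0 - QA}"
      then obtain b where b: "b \<subseteq> B" "card b = Q0 - QA" "y = a \<union> b" by blast
      have fa: "finite a" using aA(1) finite_subset by blast
      have fb: "finite b" using b(1) finite_subset[of b B] by (simp add: B_def)
      have dj: "a \<inter> b = {}" using aA(1) b(1) unfolding B_def by (auto; fastforce)
      have cy: "card y = Q0" using b True aA card_Un_disjoint[OF fa fb dj] by simp
      have ya: "y \<inter> {..<NA} = a" using aA(1) b(1,3) by (auto simp: B_def)
      show "y \<in> fib NA NB Q0 QA a"
        using cy ya aA b by (auto simp: fib_def blk_def charge_sector_def B_def)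
    qed
  qed
  then have "card (fib NA NB Q0 QA a) = card {b. b \<subseteq> B \<and> card b = Q0 - QA}"
    by (rule bij_betw_same_card)
  also have "\<dots> = NB choose (Q0 - QA)" using n_subsets[of B "Q0 - QA"] by (simp add: B_def)
  finally show ?thesis using True by simp
qed

lemma key_in_Aset: "x \<in> blk NA NB Q0 QA \<Longrightarrow> x \<inter> {..<NA} \<in> Aset NA QA"
  by (auto simp: blk_def Aset_def)

lemma card_blk:
  "card (blk NA NB Q0 QA) = (NA choose QA) * (if QA \<le> Q0 then NB choose (Q0 - QA) else 0)"
proof -
  have "card (blk NA NB Q0 QA) = (\<Sum>a\<in>Aset NA QA. card (fib NA NB Q0 QA a))"
    unfolding fib_def card_eq_sum
    by (rule sum.group[symmetric]) (auto simp: key_in_Aset)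
  also have "\<dots> = (\<Sum>a\<in>Aset NA QA. (if QA \<le> Q0 then NB choose (Q0 - QA) else 0))"
    by (rule sum.cong) (auto simp: card_fib)
  finally show ?thesis by (simp add: card_Aset)
qed

lemma sector_blocks: "charge_sector (NA+NB) Q0 = (\<Union>QA\<in>{0..NA}. blk NA NB Q0 QA)"
proof -
  have "card (x \<inter> {..<NA}) \<le> NA" for x :: "nat set"
    by (metis card_lessThan card_mono finite_lessThan inf_le2)
  then show ?thesis by (auto simp: blk_def)
qed

lemma disj_blocks: "disjoint_family_on (blk NA NB Q0) I"
  by (auto simp: disjoint_family_on_def blk_def)

definition Rf :: "nat \<Rightarrow> nat \<Rightarrow> nat \<Rightarrow> nat \<Rightarrow> (nat set \<Rightarrow> complex) \<Rightarrow> real" where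
  "Rf NA NB Q0 QA c = (\<Sum>a\<in>Aset NA QA. (cmod (\<Sum>x\<in>fib NA NB Q0 QA a. c x))\<^sup>2)"

lemma plus_proj_B_const: "plus_proj_B NA NB x y = complex_of_real ((1/2)^NB)"
proof -
  have eq: "plus_amp b * cnj (plus_amp b') = complex_of_real (1/2)" for b b'
    unfolding plus_amp_def by (simp only: complex_cnj_complex_of_real of_real_mult[symmetric]) (simp add: real_sqrt_mult[symmetric])
  have "plus_proj_B NA NB x y = (\<Prod>j = NA..<NA+NB. complex_of_real (1/2))"
    unfolding plus_proj_B_def by (rule prod.cong[OF refl]) (rule eq)
  then show ?thesis by (simp add: of_real_power)
qed

lemma expval_formula:
  assumes Z: "\<And>x. x \<notin> charge_sector (NA+NB) Q0 \<Longrightarrow> \<Phi> x = 0"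
  shows "expval (NA+NB) (\<lambda>x y. charge_proj_A NA QA x y * plus_proj_B NA NB x y) \<Phi>
       = complex_of_real ((1/2)^NB * Rf NA NB Q0 QA \<Phi>)"
proof -
  define S0 where "S0 = charge_sector (NA+NB) Q0"
  define c0 :: complex where "c0 = complex_of_real ((1/2)^NB)"
  define f where "f x y = cnj (\<Phi> x) * \<Phi> y" for x y
  define key where "key x = x \<inter> {..<NA}" for x :: "nat set"
  have SP: "S0 \<subseteq> basis_strings (NA+NB)" by (auto simp: S0_def charge_sector_def basis_strings_def)
  have finP: "finite (basis_strings (NA+NB))" by (simp add: basis_strings_def)
  have "expval (NA+NB) (\<lambda>x y. charge_proj_A NA QA x y * plus_proj_B NA NB x y) \<Phi>
      = (\<Sum>x\<in>S0. \<Sum>y\<in>S0. cnj (\<Phi> x) * (charge_proj_A NA QA x y * c0) * \<Phi> y)"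
    unfolding expval_def plus_proj_B_const c0_def[symmetric]
  proof (rule sum.mono_neutral_cong_right[OF finP SP])
    show "\<forall>x\<in>basis_strings (NA + NB) - S0. (\<Sum>y\<in>basis_strings (NA + NB). cnj (\<Phi> x) * (charge_proj_A NA QA x y * c0) * \<Phi> y) = 0"
      using Z by (auto simp: S0_def)
    fix x assume "x \<in> S0"
    show "(\<Sum>y\<in>basis_strings (NA + NB). cnj (\<Phi> x) * (charge_proj_A NA QA x y * c0) * \<Phi> y) =
          (\<Sum>y\<in>S0. cnj (\<Phi> x) * (charge_proj_A NA QA x y * c0) * \<Phi> y)"
      by (rule sum.mono_neutral_cong_right[OF finP SP]) (use Z in \<open>auto simp: S0_def\<close>)
  qed
  also have "\<dots> = c0 * (\<Sum>x\<in>S0. \<Sum>y\<in>S0. if key x = key y \<and> card (key x) = QA then f x y else 0)"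
  proof -
    have pt: "cnj (\<Phi> x) * (charge_proj_A NA QA x y * c0) * \<Phi> y = c0 * (if key x = key y \<and> card (key x) = QA then f x y else 0)" for x y
      unfolding charge_proj_A_def key_def f_def
      by (cases "x \<inter> {..<NA} = y \<inter> {..<NA} \<and> card (x \<inter> {..<NA}) = QA") (simp_all only: if_True if_False, simp_all)
    show ?thesis unfolding pt sum_distrib_left ..
  qed
  also have "(\<Sum>x\<in>S0. \<Sum>y\<in>S0. if key x = key y \<and> card (key x) = QA then f x y else 0)
      = (\<Sum>x\<in>blk NA NB Q0 QA. \<Sum>y\<in>fib NA NB Q0 QA (key x). f x y)"
  proof -
    have finS0: "finite S0" by (simp add: S0_def)
    have blkS: "blk NA NB Q0 QA = {x \<in> S0. card (key x) = QA}" by (simp add: blk_def S0_def key_def)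
    have inner: "(\<Sum>y\<in>S0. if key x = key y \<and> card (key x) = QA then f x y else 0)
          = (if card (key x) = QA then (\<Sum>y\<in>fib NA NB Q0 QA (key x). f x y) else 0)" if x: "x \<in> S0" for x
    proof (cases "card (key x) = QA")
      case True
      have fe: "fib NA NB Q0 QA (key x) = {y \<in> S0. key x = key y}"
      proof (rule set_eqI)
        fix y
        have "y \<in> fib NA NB Q0 QA (key x) \<longleftrightarrow> y \<in> S0 \<and> card (y \<inter> {..<NA}) = QA \<and> y \<inter> {..<NA} = key x"
          by (simp add: fib_def blk_def S0_def)
        also have "\<dots> \<longleftrightarrow> y \<in> S0 \<and> key x = key y" using True unfolding key_def by metis
        finally show "y \<in> fib NA NB Q0 QA (key x) \<longleftrightarrow> y \<in> {y \<in> S0. key x = key y}" by simp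
      qed
      have "(\<Sum>y\<in>S0. if key x = key y \<and> card (key x) = QA then f x y else 0)
          = (\<Sum>y\<in>S0. if key x = key y then f x y else 0)" using True by simp
      also have "\<dots> = (\<Sum>y\<in>{y \<in> S0. key x = key y}. f x y)"
        by (rule sum.inter_filter[OF finS0, symmetric])
      finally show ?thesis using True fe by simp
    next
      case False
      then show ?thesis by simp
    qed
    have "(\<Sum>x\<in>S0. \<Sum>y\<in>S0. if key x = key y \<and> card (key x) = QA then f x y else 0)
       = (\<Sum>x\<in>S0. if card (key x) = QA then (\<Sum>y\<in>fib NA NB Q0 QA (key x). f x y) else 0)"
      by (rule sum.cong[OF refl]) (rule inner)
    also have "\<dots> = (\<Sum>x\<in>{x \<in> S0. card (key x) = QA}. \<Sum>y\<in>fib NA NB Q0 QA (key x). f x y)"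
      by (rule sum.inter_filter[OF finS0, symmetric])
    finally show ?thesis unfolding blkS .
  qed
  also have "\<dots> = (\<Sum>a\<in>Aset NA QA. \<Sum>x\<in>fib NA NB Q0 QA a. \<Sum>y\<in>fib NA NB Q0 QA a. f x y)"
  proof -
    have "(\<Sum>a\<in>Aset NA QA. \<Sum>x\<in>{x\<in>blk NA NB Q0 QA. key x = a}. \<Sum>y\<in>fib NA NB Q0 QA (key x). f x y)
       = (\<Sum>x\<in>blk NA NB Q0 QA. \<Sum>y\<in>fib NA NB Q0 QA (key x). f x y)"
      by (rule sum.group) (simp_all add: image_subset_iff key_def key_in_Aset)
    moreover have "(\<Sum>a\<in>Aset NA QA. \<Sum>x\<in>{x\<in>blk NA NB Q0 QA. key x = a}. \<Sum>y\<in>fib NA NB Q0 QA (key x). f x y)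
       = (\<Sum>a\<in>Aset NA QA. \<Sum>x\<in>fib NA NB Q0 QA a. \<Sum>y\<in>fib NA NB Q0 QA a. f x y)"
      by (rule sum.cong[OF refl], rule sum.cong) (simp_all add: fib_def key_def)
    ultimately show ?thesis by simp
  qed
  also have "\<dots> = complex_of_real (Rf NA NB Q0 QA \<Phi>)"
    unfolding Rf_def of_real_sum
  proof (rule sum.cong[OF refl])
    fix a
    have "complex_of_real ((cmod (\<Sum>x\<in>fib NA NB Q0 QA a. \<Phi> x))\<^sup>2)
        = cnj (\<Sum>x\<in>fib NA NB Q0 QA a. \<Phi> x) * (\<Sum>x\<in>fib NA NB Q0 QA a. \<Phi> x)"
      by (subst complex_norm_square) (rule mult.commute)
    also have "\<dots> = (\<Sum>x\<in>fib NA NB Q0 QA a. \<Sum>y\<in>fib NA NB Q0 QA a. f x y)"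
      by (simp add: f_def cnj_sum sum_product)
    finally show "(\<Sum>x\<in>fib NA NB Q0 QA a. \<Sum>y\<in>fib NA NB Q0 QA a. f x y) = complex_of_real ((cmod (\<Sum>x\<in>fib NA NB Q0 QA a. \<Phi> x))\<^sup>2)" ..
  qed
  finally show ?thesis by (simp add: c0_def)
qed

lemma sector_norm_nsq: "sector_norm N Q c = sqrt (nsq (charge_sector N Q) c)"
  by (simp add: sector_norm_def nsq_def)

lemma sector_state_zero: "x \<notin> charge_sector N Q \<Longrightarrow> sector_state N Q c x = 0"
  by (simp add: sector_state_def)

lemma fib_in_S0: "x \<in> fib NA NB Q0 QA a \<Longrightarrow> x \<in> charge_sector (NA+NB) Q0"
  using fib_sub blk_sub by blast

lemma Rf_state:
  "Rf NA NB Q0 QA (sector_state (NA+NB) Q0 c) = Rf NA NB Q0 QA c / nsq (charge_sector (NA+NB) Q0) c"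
proof -
  define n where "n = sector_norm (NA+NB) Q0 c"
  have n: "n\<^sup>2 = nsq (charge_sector (NA+NB) Q0) c" "n \<ge> 0"
    by (simp_all add: n_def sector_norm_nsq nsq_nonneg)
  have "(\<Sum>x\<in>fib NA NB Q0 QA a. sector_state (NA+NB) Q0 c x) = (\<Sum>x\<in>fib NA NB Q0 QA a. c x) / complex_of_real n" for a
  proof -
    have "(\<Sum>x\<in>fib NA NB Q0 QA a. sector_state (NA+NB) Q0 c x) = (\<Sum>x\<in>fib NA NB Q0 QA a. c x / complex_of_real n)"
      by (rule sum.cong[OF refl]) (simp add: sector_state_def n_def fib_in_S0)
    then show ?thesis by (simp add: sum_divide_distrib)
  qed
  then have "Rf NA NB Q0 QA (sector_state (NA+NB) Q0 c) = (\<Sum>a\<in>Aset NA QA. (cmod (\<Sum>x\<in>fib NA NB Q0 QA a. c x))\<^sup>2 / n\<^sup>2)"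
    unfolding Rf_def using n(2) by (simp add: norm_divide power_divide)
  also have "\<dots> = Rf NA NB Q0 QA c / n\<^sup>2" unfolding Rf_def by (simp add: sum_divide_distrib)
  finally show ?thesis using n by simp
qed

lemma p_plus_formula:
  "p_plus NA NB QA (sector_state (NA+NB) Q0 c) = Rf NA NB Q0 QA c / (2^NB * nsq (charge_sector (NA+NB) Q0) c)"
proof -
  have "expval (NA+NB) (\<lambda>x y. charge_proj_A NA QA x y * plus_proj_B NA NB x y) (sector_state (NA+NB) Q0 c)
      = complex_of_real ((1/2)^NB * Rf NA NB Q0 QA (sector_state (NA+NB) Q0 c))"
    by (rule expval_formula) (simp add: sector_state_zero)
  then have "p_plus NA NB QA (sector_state (NA+NB) Q0 c) = (1/2)^NB * Rf NA NB Q0 QA (sector_state (NA+NB) Q0 c)"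
    unfolding p_plus_def by simp
  then show ?thesis by (simp add: Rf_state power_divide)
qed

lemma Rf_meas:
  assumes "\<And>a. a \<in> Aset NA QA \<Longrightarrow> fib NA NB Q0 QA a \<subseteq> T"
  shows "Rf NA NB Q0 QA \<in> borel_measurable (MS T)"
  unfolding Rf_def
proof (intro borel_measurable_sum)
  fix a assume a: "a \<in> Aset NA QA"
  have "(\<lambda>c. \<Sum>x\<in>fib NA NB Q0 QA a. c x) \<in> borel_measurable (MS T)"
  proof (intro borel_measurable_sum)
    fix x assume "x \<in> fib NA NB Q0 QA a"
    then have "x \<in> T" using assms[OF a] by auto
    then show "(\<lambda>c. c x) \<in> borel_measurable (MS T)" by simp
  qed
  then show "(\<lambda>c. (cmod (\<Sum>x\<in>fib NA NB Q0 QA a. c x))\<^sup>2) \<in> borel_measurable (MS T)" by measurable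
qed

lemma Rf_scale:
  assumes "\<And>a. a \<in> Aset NA QA \<Longrightarrow> fib NA NB Q0 QA a \<subseteq> T"
  shows "Rf NA NB Q0 QA (\<lambda>s\<in>T. t *\<^sub>R c s) = t\<^sup>2 * Rf NA NB Q0 QA c"
proof -
  have "(\<Sum>x\<in>fib NA NB Q0 QA a. (\<lambda>s\<in>T. t *\<^sub>R c s) x) = t *\<^sub>R (\<Sum>x\<in>fib NA NB Q0 QA a. c x)" if "a \<in> Aset NA QA" for a
    using assms[OF that] by (auto simp: scaleR_sum_right intro!: sum.cong)
  then show ?thesis unfolding Rf_def
    by (simp add: sum_distrib_left power_mult_distrib)
qed

lemma Rf_restrict:
  assumes "\<And>a. a \<in> Aset NA QA \<Longrightarrow> fib NA NB Q0 QA a \<subseteq> T"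
  shows "Rf NA NB Q0 QA (restrict c T) = Rf NA NB Q0 QA c"
proof -
  have "(\<Sum>x\<in>fib NA NB Q0 QA a. restrict c T x) = (\<Sum>x\<in>fib NA NB Q0 QA a. c x)" if "a \<in> Aset NA QA" for a
    using assms[OF that] by (auto intro!: sum.cong)
  then show ?thesis unfolding Rf_def by simp
qed



lemma block_int:
  assumes QA: "QA \<le> NA"
  shows "(\<integral>\<^sup>+c. ennreal (exp (- nsq (blk NA NB Q0 QA) c)) * ennreal (Rf NA NB Q0 QA c ^ l) \<partial>MS (blk NA NB Q0 QA))
     = ennreal (pi ^ card (blk NA NB Q0 QA) * (real (if QA \<le> Q0 then NB choose (Q0 - QA) else 0) ^ l
          * (real (fact ((NA choose QA) - 1 + l)) / real (fact ((NA choose QA) - 1)))))"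
proof -
  define T where "T = blk NA NB Q0 QA"
  define U where "U = Aset NA QA"
  define m where "m = (if QA \<le> Q0 then NB choose (Q0 - QA) else 0)"
  define d where "d = NA choose QA"
  have d: "d \<ge> 1" using QA by (simp add: d_def Suc_le_eq)
  have cU: "card U = d" by (simp add: U_def d_def card_Aset)
  have Une: "U \<noteq> {}" using cU d by auto
  have cT: "card T = d * m" by (simp add: T_def card_blk d_def m_def)
  have fibeq: "{x\<in>T. x \<inter> {..<NA} = u} = fib NA NB Q0 QA u" for u by (simp add: T_def fib_def)
  have fT: "\<And>a. a \<in> U \<Longrightarrow> fib NA NB Q0 QA a \<subseteq> T" by (simp add: T_def U_def fib_sub)
  show ?thesis
  proof (cases "m = 0")
    case True
    have Te: "T = {}" using cT True by (simp add: T_def)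
    have "Rf NA NB Q0 QA c = 0" for c
      unfolding Rf_def using fT Te by (auto simp: U_def intro!: sum.neutral)
    then have "(\<integral>\<^sup>+c. ennreal (exp (- nsq T c)) * ennreal (Rf NA NB Q0 QA c ^ l) \<partial>MS T) = ennreal (0 ^ l)"
      unfolding Te by (simp add: nsq_def space_PiM_empty nn_integral_const)
    moreover have "real m ^ l * (real (fact (d - 1 + l)) / real (fact (d - 1))) = 0 ^ l"
      using True by (cases "l = 0") (simp_all add: power_0_left)
    ultimately show ?thesis using True Te by (simp add: T_def[symmetric] m_def[symmetric] d_def[symmetric])
  next
    case False
    then have m: "m \<ge> 1" by simp
    define F where "F z = ennreal (nsq U z ^ l)" for z :: "nat set \<Rightarrow> complex"
    have Fm: "F \<in> borel_measurable (MS U)" unfolding F_def by measurable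
    have RF: "ennreal (Rf NA NB Q0 QA c ^ l) = F (\<lambda>u\<in>U. \<Sum>x\<in>{x\<in>T. x \<inter> {..<NA} = u}. c x)" for c
      unfolding F_def Rf_def nsq_def fibeq U_def by simp
    have "(\<integral>\<^sup>+c. ennreal (exp (- nsq T c)) * ennreal (Rf NA NB Q0 QA c ^ l) \<partial>MS T)
        = (\<integral>\<^sup>+c. ennreal (exp (- nsq T c)) * F (\<lambda>u\<in>U. \<Sum>x\<in>{x\<in>T. x \<inter> {..<NA} = u}. c x) \<partial>MS T)"
      unfolding RF ..
    also have "\<dots> = ennreal (pi ^ ((m-1) * card U)) * (\<integral>\<^sup>+z. ennreal (exp (- nsq U z)) * F (\<lambda>u\<in>U. sqrt m *\<^sub>R z u) \<partial>MS U)"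
    proof (rule group_many[OF _ _ _ m _ Fm])
      show "finite U" "finite T" by (simp_all add: U_def T_def)
      show "\<forall>u\<in>U. card {x \<in> T. x \<inter> {..<NA} = u} = m"
        by (simp add: fibeq card_fib U_def m_def)
      show "\<forall>x\<in>T. x \<inter> {..<NA} \<in> U" by (simp add: T_def U_def key_in_Aset)
    qed
    also have "(\<integral>\<^sup>+z. ennreal (exp (- nsq U z)) * F (\<lambda>u\<in>U. sqrt m *\<^sub>R z u) \<partial>MS U)
        = (\<integral>\<^sup>+z. ennreal (real m ^ l) * (ennreal (exp (- nsq U z)) * ennreal (nsq U z ^ l)) \<partial>MS U)"
      unfolding F_def nsq_scale by (simp add: power_mult_distrib ennreal_mult nsq_nonneg mult_ac)
    also have "\<dots> = ennreal (real m ^ l) * (\<integral>\<^sup>+z. ennreal (exp (- nsq U z)) * ennreal (nsq U z ^ l) \<partial>MS U)"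
      by (rule nn_integral_cmult) measurable
    also have "(\<integral>\<^sup>+z. ennreal (exp (- nsq U z)) * ennreal (nsq U z ^ l) \<partial>MS U)
        = ennreal (pi ^ card U * real (fact (card U + l - 1)) / real (fact (card U - 1)))"
      by (rule gauss_moment) (use Une in \<open>simp_all add: U_def\<close>)
    finally have X: "(\<integral>\<^sup>+c. ennreal (exp (- nsq T c)) * ennreal (Rf NA NB Q0 QA c ^ l) \<partial>MS T)
       = ennreal (pi ^ ((m-1) * d)) * (ennreal (real m ^ l) * ennreal (pi ^ d * real (fact (d + l - 1)) / real (fact (d - 1))))"
      by (simp add: cU)
    have "pi ^ ((m-1) * d) * (real m ^ l * (pi ^ d * real (fact (d + l - 1)) / real (fact (d - 1))))
       = pi ^ card T * (real m ^ l * (real (fact (d - 1 + l)) / real (fact (d - 1))))"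
    proof -
      have "(m - 1) * d + d = card T" using m cT by (simp add: algebra_simps)
      moreover have "d + l - 1 = d - 1 + l" using d by simp
      ultimately show ?thesis by (simp add: power_add[symmetric] field_simps)
    qed
    then show ?thesis using X unfolding T_def[symmetric] m_def[symmetric] d_def[symmetric]
      by (simp add: ennreal_mult[symmetric] mult.assoc)
  qed
qed

lemma Rf_nonneg: "0 \<le> Rf NA NB Q0 QA c" unfolding Rf_def by (simp add: sum_nonneg)

lemma gauss_k:
  "(\<integral>\<^sup>+c. ennreal (exp (- nsq (charge_sector (NA+NB) Q0) c)) * ennreal (\<Prod>QA\<in>{0..NA}. Rf NA NB Q0 QA c ^ l QA) \<partial>MS (charge_sector (NA+NB) Q0))
   = ennreal (pi ^ card (charge_sector (NA+NB) Q0) * (\<Prod>QA\<in>{0..NA}. real (if QA \<le> Q0 then NB choose (Q0 - QA) else 0) ^ l QA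
          * (real (fact ((NA choose QA) - 1 + l QA)) / real (fact ((NA choose QA) - 1)))))"
proof -
  define S0 where "S0 = charge_sector (NA+NB) Q0"
  define Y where "Y QA = real (if QA \<le> Q0 then NB choose (Q0 - QA) else 0) ^ l QA
          * (real (fact ((NA choose QA) - 1 + l QA)) / real (fact ((NA choose QA) - 1)))" for QA
  have Y: "0 \<le> Y QA" for QA by (simp add: Y_def)
  have SB: "S0 = (\<Union>QA\<in>{0..NA}. blk NA NB Q0 QA)" unfolding S0_def by (rule sector_blocks)
  have fb: "\<And>a. a \<in> Aset NA QA \<Longrightarrow> fib NA NB Q0 QA a \<subseteq> blk NA NB Q0 QA" for QA by (rule fib_sub)
  have "(\<integral>\<^sup>+c. ennreal (exp (- nsq S0 c)) * ennreal (\<Prod>QA\<in>{0..NA}. Rf NA NB Q0 QA c ^ l QA) \<partial>MS S0)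
      = (\<integral>\<^sup>+c. ennreal (exp (- nsq (\<Union>QA\<in>{0..NA}. blk NA NB Q0 QA) c)) *
            (\<Prod>QA\<in>{0..NA}. (\<lambda>QA c. ennreal (Rf NA NB Q0 QA c ^ l QA)) QA (restrict c (blk NA NB Q0 QA))) \<partial>MS (\<Union>QA\<in>{0..NA}. blk NA NB Q0 QA))"
    unfolding SB[symmetric]
    by (rule nn_integral_cong) (simp add: Rf_restrict[OF fb] prod_ennreal Rf_nonneg)
  also have "\<dots> = (\<Prod>QA\<in>{0..NA}. \<integral>\<^sup>+c. ennreal (exp (- nsq (blk NA NB Q0 QA) c)) * ennreal (Rf NA NB Q0 QA c ^ l QA) \<partial>MS (blk NA NB Q0 QA))"
  proof (rule blocks)
    fix QA
    show "(\<lambda>c. ennreal (Rf NA NB Q0 QA c ^ l QA)) \<in> borel_measurable (MS (blk NA NB Q0 QA))"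
      using Rf_meas[OF fb, of QA] by measurable
  qed (simp_all add: disj_blocks)
  also have "\<dots> = (\<Prod>QA\<in>{0..NA}. ennreal (pi ^ card (blk NA NB Q0 QA) * Y QA))"
    by (rule prod.cong[OF refl]) (simp add: block_int Y_def)
  also have "\<dots> = ennreal (\<Prod>QA\<in>{0..NA}. pi ^ card (blk NA NB Q0 QA) * Y QA)"
    by (rule prod_ennreal) (simp add: Y)
  also have "(\<Prod>QA\<in>{0..NA}. pi ^ card (blk NA NB Q0 QA) * Y QA) = pi ^ card S0 * (\<Prod>QA\<in>{0..NA}. Y QA)"
  proof -
    have "card S0 = (\<Sum>QA\<in>{0..NA}. card (blk NA NB Q0 QA))"
      unfolding SB by (rule card_UN_disjoint) (auto simp: blk_def)
    then show ?thesis by (simp add: prod.distrib power_sum)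
  qed
  finally show ?thesis unfolding S0_def Y_def .
qed



context
  fixes NA NB Q0 :: nat and l :: "nat \<Rightarrow> nat"
begin

definition "S0 = charge_sector (NA+NB) Q0"
definition "hr c = (\<Prod>QA\<in>{0..NA}. (Rf NA NB Q0 QA c / (2^NB * nsq S0 c)) ^ l QA)"
definition "kr c = (\<Prod>QA\<in>{0..NA}. Rf NA NB Q0 QA c ^ l QA)"
definition "rr = (\<Sum>QA\<in>{0..NA}. l QA)"

lemma fS0: "\<And>a. a \<in> Aset NA QA \<Longrightarrow> fib NA NB Q0 QA a \<subseteq> S0"
  unfolding S0_def using fib_sub blk_sub by blast

lemma finS0[simp]: "finite S0" by (simp add: S0_def)

lemma hr_meas[measurable]: "hr \<in> borel_measurable (MS S0)"
proof -
  have [measurable]: "Rf NA NB Q0 QA \<in> borel_measurable (MS S0)" for QA by (rule Rf_meas[OF fS0])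
  show ?thesis unfolding hr_def by measurable
qed

lemma kr_meas[measurable]: "kr \<in> borel_measurable (MS S0)"
proof -
  have [measurable]: "Rf NA NB Q0 QA \<in> borel_measurable (MS S0)" for QA by (rule Rf_meas[OF fS0])
  show ?thesis unfolding kr_def by measurable
qed

lemma hr_nonneg: "0 \<le> hr c"
  unfolding hr_def by (intro prod_nonneg zero_le_power divide_nonneg_nonneg Rf_nonneg mult_nonneg_nonneg nsq_nonneg) simp_all

lemma kr_nonneg: "0 \<le> kr c"
  unfolding kr_def by (intro prod_nonneg zero_le_power Rf_nonneg)

lemma hr_hom: assumes t: "t > 0" shows "hr (\<lambda>s\<in>S0. t *\<^sub>R c s) = hr c"
proof -
  have e: "t\<^sup>2 * R / (2^NB * (t\<^sup>2 * n)) = R / (2^NB * n)" for R n :: real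
  proof -
    have "t\<^sup>2 * R / (2^NB * (t\<^sup>2 * n)) = t\<^sup>2 * R / (t\<^sup>2 * (2^NB * n))" by (simp add: mult_ac)
    also have "\<dots> = R / (2^NB * n)" using t by (rule_tac mult_divide_mult_cancel_left) simp
    finally show ?thesis .
  qed
  show ?thesis unfolding hr_def nsq_scale by (simp add: Rf_scale[OF fS0] e)
qed

lemma kr_hom: "t > 0 \<Longrightarrow> kr (\<lambda>s\<in>S0. t *\<^sub>R c s) = t ^ (2 * rr) * kr c"
  unfolding kr_def rr_def
  by (simp add: Rf_scale[OF fS0] power_mult_distrib prod.distrib power_sum power_mult[symmetric] sum_distrib_left)

lemma nsq0_Rf: "nsq S0 c = 0 \<Longrightarrow> Rf NA NB Q0 QA c = 0"
proof -
  assume "nsq S0 c = 0"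
  then have "\<forall>s\<in>S0. (cmod (c s))\<^sup>2 = 0" unfolding nsq_def
    by (subst (asm) sum_nonneg_eq_0_iff) auto
  then have z: "\<And>s. s \<in> S0 \<Longrightarrow> c s = 0" by simp
  show ?thesis unfolding Rf_def
    by (rule sum.neutral) (use fS0 z in \<open>auto intro!: sum.neutral\<close>)
qed

lemma kr_hr: "kr c = 2 ^ (rr * NB) * (nsq S0 c ^ rr * hr c)"
proof (cases "nsq S0 c = 0")
  case True
  have "kr c = 0 ^ rr" unfolding kr_def rr_def power_sum nsq0_Rf[OF True] ..
  moreover have "hr c = 0 ^ rr" unfolding hr_def rr_def power_sum nsq0_Rf[OF True] by simp
  ultimately show ?thesis using True by (cases "rr = 0") simp_all
next
  case False
  have "hr c = (\<Prod>QA\<in>{0..NA}. Rf NA NB Q0 QA c ^ l QA / (2^NB * nsq S0 c) ^ l QA)"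
    unfolding hr_def by (simp add: power_divide)
  also have "\<dots> = kr c / (2^NB * nsq S0 c) ^ rr"
    unfolding kr_def rr_def power_sum by (simp add: prod_dividef)
  finally show ?thesis using False
    by (simp add: power_mult_distrib power_mult[symmetric] mult.commute)
qed

lemma Rf_bound: "Rf NA NB Q0 QA c \<le> real (card (Aset NA QA)) * (real (card S0))\<^sup>2 * nsq S0 c"
proof -
  have cx: "cmod (c x) \<le> sqrt (nsq S0 c)" if "x \<in> S0" for x
  proof -
    have "(cmod (c x))\<^sup>2 \<le> nsq S0 c" unfolding nsq_def
      by (rule member_le_sum) (use that in auto)
    then show ?thesis using real_sqrt_le_mono by fastforce
  qed
  have "(cmod (\<Sum>x\<in>fib NA NB Q0 QA a. c x))\<^sup>2 \<le> (real (card S0))\<^sup>2 * nsq S0 c" if a: "a \<in> Aset NA QA" for a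
  proof -
    have "cmod (\<Sum>x\<in>fib NA NB Q0 QA a. c x) \<le> (\<Sum>x\<in>fib NA NB Q0 QA a. cmod (c x))" by (rule norm_sum)
    also have "\<dots> \<le> (\<Sum>x\<in>fib NA NB Q0 QA a. sqrt (nsq S0 c))"
      by (rule sum_mono) (use fS0[OF a] cx in auto)
    also have "\<dots> = real (card (fib NA NB Q0 QA a)) * sqrt (nsq S0 c)" by simp
    also have "\<dots> \<le> real (card S0) * sqrt (nsq S0 c)"
      by (rule mult_right_mono) (use card_mono[OF finS0 fS0[OF a]] in \<open>auto simp: nsq_nonneg\<close>)
    finally have "cmod (\<Sum>x\<in>fib NA NB Q0 QA a. c x) \<le> real (card S0) * sqrt (nsq S0 c)" .
    then have "(cmod (\<Sum>x\<in>fib NA NB Q0 QA a. c x))\<^sup>2 \<le> (real (card S0) * sqrt (nsq S0 c))\<^sup>2"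
      by (rule power_mono) simp
    then show ?thesis by (simp add: power_mult_distrib nsq_nonneg)
  qed
  then have "Rf NA NB Q0 QA c \<le> (\<Sum>a\<in>Aset NA QA. (real (card S0))\<^sup>2 * nsq S0 c)"
    unfolding Rf_def by (rule sum_mono)
  then show ?thesis by simp
qed

definition "Kb = (\<Prod>QA\<in>{0..NA}. (real (card (Aset NA QA)) * (real (card S0))\<^sup>2) ^ l QA)"

lemma hr_bound: "hr c \<le> Kb"
  unfolding hr_def Kb_def
proof (rule prod_mono, rule conjI)
  fix QA
  show "0 \<le> (Rf NA NB Q0 QA c / (2 ^ NB * nsq S0 c)) ^ l QA"
    by (simp add: Rf_nonneg nsq_nonneg)
  have "Rf NA NB Q0 QA c / (2 ^ NB * nsq S0 c) \<le> real (card (Aset NA QA)) * (real (card S0))\<^sup>2"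
  proof (cases "nsq S0 c = 0")
    case False
    then have n: "nsq S0 c > 0" using nsq_nonneg[of S0 c] by simp
    have "Rf NA NB Q0 QA c / (2 ^ NB * nsq S0 c) \<le> Rf NA NB Q0 QA c / nsq S0 c"
      by (rule divide_left_mono) (use n Rf_nonneg in \<open>auto simp: mult_le_cancel_right1\<close>)
    also have "\<dots> \<le> real (card (Aset NA QA)) * (real (card S0))\<^sup>2"
      using Rf_bound[of QA c] n by (simp add: divide_le_eq)
    finally show ?thesis .
  qed simp
  then show "(Rf NA NB Q0 QA c / (2 ^ NB * nsq S0 c)) ^ l QA \<le> (real (card (Aset NA QA)) * (real (card S0))\<^sup>2) ^ l QA"
    by (rule power_mono) (simp add: Rf_nonneg nsq_nonneg)
qed


lemma Bint_hr_fin: "Bint S0 (\<lambda>c. ennreal (hr c)) < \<infinity>"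
proof -
  have "Bint S0 (\<lambda>c. ennreal (hr c)) \<le> Bint S0 (\<lambda>c. ennreal Kb * 1)"
    unfolding Bint_def by (intro nn_integral_mono mult_left_mono) (auto intro: ennreal_leI hr_bound)
  also have "\<dots> = ennreal Kb * Bint S0 (\<lambda>_. 1)"
    unfolding Bint_def by (subst nn_integral_cmult[symmetric]) (measurable, simp add: mult_ac)
  also have "\<dots> < \<infinity>" by (simp add: ball_vol ennreal_mult_less_top)
  finally show ?thesis .
qed

lemma fact_ratio2:
  fixes D r :: nat and b P X :: real assumes "D \<ge> 1"
  shows "real (fact (D + r)) * X * (real D / real (D + r)) * b = Y \<Longrightarrow> X \<noteq> 0 \<Longrightarrow>
         b * real (fact D) = Y * real (fact (D - 1)) / real (fact (D - 1 + r)) / X"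
proof -
  obtain e where e: "D = Suc e" using assms by (cases D) auto
  define F :: real where "F = fact (e + r)"
  define G :: real where "G = fact e"
  have G: "G > 0" "F > 0" unfolding G_def F_def by simp_all
  have h1: "real (fact (D + r)) = real (Suc e + r) * F"
  proof -
    have "(fact (D + r) :: nat) = (Suc e + r) * fact (e + r)" unfolding e by simp
    then show ?thesis unfolding F_def by (metis of_nat_fact of_nat_mult)
  qed
  have h2: "real (fact D) = real (Suc e) * G"
  proof -
    have "(fact D :: nat) = (Suc e) * fact e" unfolding e by simp
    then show ?thesis unfolding G_def by (metis of_nat_fact of_nat_mult)
  qed
  have h3: "real (fact (D - 1 + r)) = F" "real (fact (D - 1)) = G" unfolding e F_def G_def by (simp_all add: of_nat_fact)
  assume Y: "real (fact (D + r)) * X * (real D / real (D + r)) * b = Y" and X: "X \<noteq> 0"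
  have q: "real (Suc e + r) * (real (Suc e) / real (Suc e + r)) = real (Suc e)"
    by (simp del: of_nat_Suc add: of_nat_Suc[symmetric])
  have Y': "Y = F * X * real (Suc e) * b"
  proof -
    have "Y = (real (Suc e + r) * (real (Suc e) / real (Suc e + r))) * F * X * b"
      using Y[unfolded h1] unfolding e by (simp only: mult_ac)
    then show ?thesis unfolding q by (simp only: mult_ac)
  qed
  show ?thesis unfolding h2 h3 Y' using X G by (simp add: field_simps)
qed

lemma main_ctx:
  assumes Q: "Q0 \<le> NA + NB"
  shows "haar_expectation (NA + NB) Q0
           (\<lambda>\<Phi>. \<Prod>QA\<in>{0..NA}. (p_plus NA NB QA \<Phi>) ^ l QA)
         = real (fact ((NA + NB choose Q0) - 1))
             / real (fact ((NA + NB choose Q0) - 1 + (\<Sum>QA\<in>{0..NA}. l QA)))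
           * (1 / 2 ^ ((\<Sum>QA\<in>{0..NA}. l QA) * NB))
           * (\<Prod>QA\<in>{0..NA}.
                real (if QA \<le> Q0 then NB choose (Q0 - QA) else 0) ^ l QA
                * (real (fact ((NA choose QA) - 1 + l QA)) / real (fact ((NA choose QA) - 1))))"
proof -
  define D where "D = card S0"
  define P where "P = (\<Prod>QA\<in>{0..NA}. real (if QA \<le> Q0 then NB choose (Q0 - QA) else 0) ^ l QA
                * (real (fact ((NA choose QA) - 1 + l QA)) / real (fact ((NA choose QA) - 1))))"
  have P: "0 \<le> P" unfolding P_def by (intro prod_nonneg mult_nonneg_nonneg) simp_all
  have DN: "D = (NA + NB choose Q0)" by (simp add: D_def S0_def card_sector)
  have D1: "D \<ge> 1" using Q by (simp add: DN Suc_le_eq)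
  have S0ne: "S0 \<noteq> {}" using D1 by (auto simp: D_def)
  define Ball where "Ball = sector_ball (NA+NB) Q0"
  have SS: "sector_space (NA+NB) Q0 = MS S0" by (simp add: sector_space_def S0_def)
  have Ball_eq: "Ball = {c \<in> space (MS S0). sqrt (nsq S0 c) \<le> 1}"
    by (simp add: Ball_def sector_ball_def SS sector_norm_nsq S0_def)
  have Ball_sets: "Ball \<in> sets (MS S0)" unfolding Ball_eq by measurable
  have ind: "indicator Ball c = (indicator {c. nsq S0 c \<le> 1} c :: ennreal)" if "c \<in> space (MS S0)" for c
    using that by (simp add: Ball_eq indicator_def)
  have LHS: "haar_expectation (NA + NB) Q0 (\<lambda>\<Phi>. \<Prod>QA\<in>{0..NA}. (p_plus NA NB QA \<Phi>) ^ l QA)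
     = enn2real (Bint S0 (\<lambda>c. ennreal (hr c)) / Bint S0 (\<lambda>_. 1))"
  proof -
    have "haar_expectation (NA + NB) Q0 (\<lambda>\<Phi>. \<Prod>QA\<in>{0..NA}. (p_plus NA NB QA \<Phi>) ^ l QA)
        = integral\<^sup>L (uniform_measure (MS S0) Ball) hr"
      unfolding haar_expectation_def SS Ball_def[symmetric]
      by (intro Bochner_Integration.integral_cong refl) (simp add: p_plus_formula hr_def S0_def)
    also have "\<dots> = enn2real (\<integral>\<^sup>+c. ennreal (hr c) \<partial>uniform_measure (MS S0) Ball)"
    proof (rule integral_eq_nn_integral)
      show "hr \<in> borel_measurable (uniform_measure (MS S0) Ball)"
        using hr_meas by (subst measurable_cong_sets[OF sets_uniform_measure refl])
      show "AE x in uniform_measure (MS S0) Ball. 0 \<le> hr x" by (simp add: hr_nonneg)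
    qed
    also have "(\<integral>\<^sup>+c. ennreal (hr c) \<partial>uniform_measure (MS S0) Ball) = (\<integral>\<^sup>+c. ennreal (hr c) * indicator Ball c \<partial>MS S0) / emeasure (MS S0) Ball"
      by (rule nn_integral_uniform_measure) (use Ball_sets in measurable)
    also have "(\<integral>\<^sup>+c. ennreal (hr c) * indicator Ball c \<partial>MS S0) = Bint S0 (\<lambda>c. ennreal (hr c))"
      unfolding Bint_def by (rule nn_integral_cong) (simp add: ind mult.commute)
    also have "emeasure (MS S0) Ball = Bint S0 (\<lambda>_. 1)"
    proof -
      have "emeasure (MS S0) Ball = (\<integral>\<^sup>+c. indicator Ball c \<partial>MS S0)"
        using nn_integral_indicator[OF Ball_sets] by simp
      also have "\<dots> = Bint S0 (\<lambda>_. 1)"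
        unfolding Bint_def by (rule nn_integral_cong) (simp add: ind)
      finally show ?thesis .
    qed
    finally show ?thesis .
  qed
  have B1: "Bint S0 (\<lambda>_. 1) = ennreal (pi ^ D / fact D)" by (simp add: ball_vol D_def)
  have G1: "(\<integral>\<^sup>+c. ennreal (exp (- nsq S0 c)) * ennreal (kr c) \<partial>MS S0) = ennreal (fact (D + rr)) * Bint S0 (\<lambda>c. ennreal (kr c))"
    unfolding D_def
  proof (rule gauss_ball[OF finS0])
    fix c :: "nat set \<Rightarrow> complex" and t :: real assume "t > 0"
    then show "ennreal (kr (\<lambda>s\<in>S0. t *\<^sub>R c s)) = ennreal (t ^ (2 * rr)) * ennreal (kr c)"
      by (simp add: kr_hom ennreal_mult kr_nonneg)
  qed measurable
  have G2: "(\<integral>\<^sup>+c. ennreal (exp (- nsq S0 c)) * ennreal (kr c) \<partial>MS S0) = ennreal (pi ^ D * P)"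
    unfolding kr_def D_def P_def S0_def by (rule gauss_k)
  have K1: "Bint S0 (\<lambda>c. ennreal (kr c)) = ennreal (2 ^ (rr * NB)) * Bint S0 (\<lambda>c. ennreal (nsq S0 c ^ rr) * ennreal (hr c))"
  proof -
    have "Bint S0 (\<lambda>c. ennreal (kr c)) = (\<integral>\<^sup>+c. ennreal (2 ^ (rr * NB)) * (indicator {c. nsq S0 c \<le> 1} c * (ennreal (nsq S0 c ^ rr) * ennreal (hr c))) \<partial>MS S0)"
      unfolding Bint_def
      by (rule nn_integral_cong) (simp add: kr_hr ennreal_mult nsq_nonneg hr_nonneg mult_ac)
    also have "\<dots> = ennreal (2 ^ (rr * NB)) * Bint S0 (\<lambda>c. ennreal (nsq S0 c ^ rr) * ennreal (hr c))"
      unfolding Bint_def by (rule nn_integral_cmult) measurable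
    finally show ?thesis .
  qed
  have R1: "Bint S0 (\<lambda>c. ennreal (nsq S0 c ^ rr) * ennreal (hr c)) = ennreal (real D / real (D + rr)) * Bint S0 (\<lambda>c. ennreal (hr c))"
    unfolding D_def
    by (rule radial[OF finS0 S0ne]) (simp_all add: hr_hom Bint_hr_fin[unfolded infinity_ennreal_def])
  obtain b where b: "Bint S0 (\<lambda>c. ennreal (hr c)) = ennreal b" "0 \<le> b"
    using Bint_hr_fin ennreal_cases[of "Bint S0 (\<lambda>c. ennreal (hr c))"] by auto
  have "ennreal (pi ^ D * P) = ennreal (fact (D + rr)) * (ennreal (2 ^ (rr * NB)) * (ennreal (real D / real (D + rr)) * ennreal b))"
    using G1 G2 K1 R1 b by simp
  also have "\<dots> = ennreal (real (fact (D + rr)) * 2 ^ (rr * NB) * (real D / real (D + rr)) * b)"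
  proof -
    have n: "0 \<le> real (fact (D + rr))" "0 \<le> (2::real) ^ (rr * NB)" "0 \<le> real D / real (D + rr)" by simp_all
    have "ennreal (real (fact (D + rr)) * 2 ^ (rr * NB) * (real D / real (D + rr)) * b)
       = ennreal (real (fact (D + rr))) * ennreal (2 ^ (rr * NB)) * ennreal (real D / real (D + rr)) * ennreal b"
      using n b by (simp only: ennreal_mult mult_nonneg_nonneg)
    then show ?thesis by (simp only: mult.assoc of_nat_fact)
  qed
  finally have E: "real (fact (D + rr)) * 2 ^ (rr * NB) * (real D / real (D + rr)) * b = pi ^ D * P"
    using b P by (subst (asm) ennreal_inj) (auto intro!: mult_nonneg_nonneg)
  have "enn2real (Bint S0 (\<lambda>c. ennreal (hr c)) / Bint S0 (\<lambda>_. 1)) = b / (pi ^ D / fact D)"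
    unfolding b B1 using b by (simp add: divide_ennreal)
  also have "\<dots> = (b * real (fact D)) / pi ^ D" by (simp add: of_nat_fact)
  also have "b * real (fact D) = pi ^ D * P * real (fact (D - 1)) / real (fact (D - 1 + rr)) / 2 ^ (rr * NB)"
    by (rule fact_ratio2[OF D1 E]) simp
  also have "(pi ^ D * P * real (fact (D - 1)) / real (fact (D - 1 + rr)) / 2 ^ (rr * NB)) / pi ^ D
      = real (fact (D - 1)) / real (fact (D - 1 + rr)) * (1 / 2 ^ (rr * NB)) * P"
    by (simp add: field_simps)
  finally have "enn2real (Bint S0 (\<lambda>c. ennreal (hr c)) / Bint S0 (\<lambda>_. 1)) = real (fact (D - 1)) / real (fact (D - 1 + rr)) * (1 / 2 ^ (rr * NB)) * P" .
  then show ?thesis unfolding LHS DN[symmetric] P_def[symmetric] rr_def[symmetric] .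
qed

end

theorem mainTheorem3:
  fixes NA NB Q0 :: nat and l :: "nat \<Rightarrow> nat"
  assumes "Q0 \<le> NA + NB"
  shows "haar_expectation (NA + NB) Q0
           (\<lambda>\<Phi>. \<Prod>QA\<in>{0..NA}. (p_plus NA NB QA \<Phi>) ^ l QA)
         = real (fact ((NA + NB choose Q0) - 1))
             / real (fact ((NA + NB choose Q0) - 1 + (\<Sum>QA\<in>{0..NA}. l QA)))
           * (1 / 2 ^ ((\<Sum>QA\<in>{0..NA}. l QA) * NB))
           * (\<Prod>QA\<in>{0..NA}.
                real (if QA \<le> Q0 then NB choose (Q0 - QA) else 0) ^ l QA
                * (real (fact ((NA choose QA) - 1 + l QA)) / real (fact ((NA choose QA) - 1))))"
  using main_ctx[OF assms] .


end
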